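(* Let $\mathcal{R}=(G_0,e\to R)$ be an expanding replacement system with limit space $X$ and rearrangement group $\mathcal{G}$. Then every finite subgroup of $\mathcal{G}$ is contained in $\mathrm{Aut}_{\mathcal{R}}(E)$ for some expansion $E$ of $G_0$.
   Context: A graph means a finite directed multigraph (loops, multiple edges allowed); isomorphisms preserve directions. A replacement system $\mathcal{R}=(G_0,e\to R)$: $G_0$ a graph, $e$ a non-loop directed edge from $v$ to $w$, $R$ a graph containing $v,w$ (initial and terminal vertices). Replacing an edge $\varepsilon$ of a graph means deleting it and gluing in a copy of $R$ with initial/terminal vertices identified with those of $\varepsilon$; new edges are named $\varepsilon\zeta$ ($\zeta\in E(R)$). An expansion of $G_0$ is a graph obtained by finitely many replacements; its edges are words $\varepsilon_0\varepsilon_1\cdots\varepsilon_n$. $G_n$ denotes the graph obtained by replacing all edges $n$ times. $\mathcal{R}$ is expanding if neither $G_0$ nor $R$ has isolated vertices, the initial and terminal vertices of $R$ are not adjacent, and $R$ has at least three vertices and two edges. $\Omega=E(G_0)\times E(R)^{\mathbb{N}}$; $\varepsilon_0\varepsilon_1\cdots\sim\varepsilon'_0\varepsilon'_1\cdots$ iff for all $n$ the edges $\varepsilon_0\cdots\varepsilon_n$ and $\varepsilon'_0\cdots\varepsilon'_n$ of $G_n$ share a vertex; $X=\Omega/\sim$. The cell $C(e')$ of an edge $e'$ of an expansion is the image of all sequences with prefix $e'$; its interior excludes the (images of the) endpoints of $e'$. For $e',e''$ both loops or both non-loops, the canonical homeomorphism $C(e')\to C(e'')$ is induced by $e'\zeta_1\zeta_2\cdots\mapsto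 e''\zeta_1\zeta_2\cdots$. A rearrangement of $X$ is a homeomorphism $X\to X$ restricting to a canonical homeomorphism on each cell of some finite cover of $X$ by cells with disjoint interiors; $\mathcal{G}$ is the group of all rearrangements. For an expansion $E$ of $G_0$, $\mathrm{Aut}_{\mathcal{R}}(E)$ is the subgroup of $\mathcal{G}$ consisting of all rearrangements $f$ for which there is a directed graph automorphism $\varphi$ of $E$ such that $f$ maps $C(\epsilon)$ canonically onto $C(\varphi(\epsilon))$ for each edge $\epsilon$ of $E$. *)

theory Defs
  imports "HOL-Analysis.Analysis" "HOL-Algebra.Group"
begin

record ('v,'e) graph =
  verts :: "'v set"
  arcs :: "'e set"
  tail :: "'e \<Rightarrow> 'v"
  head :: "'e \<Rightarrow> 'v"

definition wf_graph :: "('v,'e) graph \<Rightarrow> bool" where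
  "wf_graph G \<longleftrightarrow> finite (verts G) \<and> finite (arcs G) \<and>
     tail G ` arcs G \<subseteq> verts G \<and> head G ` arcs G \<subseteq> verts G"

definition no_isolated :: "('v,'e) graph \<Rightarrow> bool" where
  "no_isolated G \<longleftrightarrow> (\<forall>v\<in>verts G. \<exists>a\<in>arcs G. v = tail G a \<or> v = head G a)"

text \<open>A replacement system (G0, e -> R): base graph G0, replacement graph R with
  initial vertex ini and terminal vertex ter (the endpoints of the replaced edge e).\<close>

record ('v,'e) repsys =
  base :: "('v,'e) graph"
  rep :: "('v,'e) graph"
  ini :: 'v
  ter :: 'v

definition replacement_system :: "('v,'e) repsys \<Rightarrow> bool" where
  "replacement_system RS \<longleftrightarrow> wf_graph (base RS) \<and> wf_graph (rep RS) \<and>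
     ini RS \<in> verts (rep RS) \<and> ter RS \<in> verts (rep RS) \<and> ini RS \<noteq> ter RS"

definition expanding :: "('v,'e) repsys \<Rightarrow> bool" where
  "expanding RS \<longleftrightarrow> replacement_system RS \<and>
     no_isolated (base RS) \<and> no_isolated (rep RS) \<and>
     \<not> (\<exists>a\<in>arcs (rep RS). {tail (rep RS) a, head (rep RS) a} = {ini RS, ter RS}) \<and>
     card (verts (rep RS)) \<ge> 3 \<and> card (arcs (rep RS)) \<ge> 2"

text \<open>Graphs obtained by replacement: edges are words (lists of edge names), vertices are
  pairs (w, u): ([], v) for a vertex v of G0, and (eps, u) for the copy of the internal
  vertex u of R glued in when the edge eps was replaced.\<close>

type_synonym ('v,'e) xgraph = "('e list \<times> 'v, 'e list) graph"

definition lift0 :: "('v,'e) repsys \<Rightarrow> ('v,'e) xgraph" where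
  "lift0 RS = \<lparr>verts = (\<lambda>v. ([], v)) ` verts (base RS),
              arcs = (\<lambda>a. [a]) ` arcs (base RS),
              tail = (\<lambda>w. ([], tail (base RS) (hd w))),
              head = (\<lambda>w. ([], head (base RS) (hd w)))\<rparr>"

definition vmap :: "('v,'e) repsys \<Rightarrow> ('v,'e) xgraph \<Rightarrow> 'e list \<Rightarrow> 'v \<Rightarrow> 'e list \<times> 'v" where
  "vmap RS \<Gamma> \<epsilon> u = (if u = ini RS then tail \<Gamma> \<epsilon> else if u = ter RS then head \<Gamma> \<epsilon> else (\<epsilon>, u))"

definition replace :: "('v,'e) repsys \<Rightarrow> ('v,'e) xgraph \<Rightarrow> 'e list \<Rightarrow> ('v,'e) xgraph" where
  "replace RS \<Gamma> \<epsilon> =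
     \<lparr>verts = verts \<Gamma> \<union> (\<lambda>u. (\<epsilon>, u)) ` (verts (rep RS) - {ini RS, ter RS}),
      arcs = (arcs \<Gamma> - {\<epsilon>}) \<union> (\<lambda>z. \<epsilon> @ [z]) ` arcs (rep RS),
      tail = (\<lambda>x. if x \<in> (\<lambda>z. \<epsilon> @ [z]) ` arcs (rep RS)
                  then vmap RS \<Gamma> \<epsilon> (tail (rep RS) (last x)) else tail \<Gamma> x),
      head = (\<lambda>x. if x \<in> (\<lambda>z. \<epsilon> @ [z]) ` arcs (rep RS)
                  then vmap RS \<Gamma> \<epsilon> (head (rep RS) (last x)) else head \<Gamma> x)\<rparr>"

inductive_set expansions :: "('v,'e) repsys \<Rightarrow> ('v,'e) xgraph set" for RS where
  base_exp: "lift0 RS \<in> expansions RS"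
| replace_exp: "\<Gamma> \<in> expansions RS \<Longrightarrow> \<epsilon> \<in> arcs \<Gamma> \<Longrightarrow> replace RS \<Gamma> \<epsilon> \<in> expansions RS"

definition replace_all :: "('v,'e) repsys \<Rightarrow> ('v,'e) xgraph \<Rightarrow> ('v,'e) xgraph" where
  "replace_all RS \<Gamma> =
     \<lparr>verts = verts \<Gamma> \<union> {(\<epsilon>, u) | \<epsilon> u. \<epsilon> \<in> arcs \<Gamma> \<and> u \<in> verts (rep RS) - {ini RS, ter RS}},
      arcs = {\<epsilon> @ [z] | \<epsilon> z. \<epsilon> \<in> arcs \<Gamma> \<and> z \<in> arcs (rep RS)},
      tail = (\<lambda>x. vmap RS \<Gamma> (butlast x) (tail (rep RS) (last x))),
      head = (\<lambda>x. vmap RS \<Gamma> (butlast x) (head (rep RS) (last x)))\<rparr>"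

fun Gn :: "('v,'e) repsys \<Rightarrow> nat \<Rightarrow> ('v,'e) xgraph" where
  "Gn RS 0 = lift0 RS"
| "Gn RS (Suc n) = replace_all RS (Gn RS n)"

definition Omega :: "('v,'e) repsys \<Rightarrow> (nat \<Rightarrow> 'e) set" where
  "Omega RS = {\<omega>. \<omega> 0 \<in> arcs (base RS) \<and> (\<forall>n. \<omega> (Suc n) \<in> arcs (rep RS))}"

definition pref :: "(nat \<Rightarrow> 'e) \<Rightarrow> nat \<Rightarrow> 'e list" where
  "pref \<omega> n = map \<omega> [0..<Suc n]"

definition ends :: "('v,'e) graph \<Rightarrow> 'e \<Rightarrow> 'v set" where
  "ends G x = {tail G x, head G x}"

definition omrel :: "('v,'e) repsys \<Rightarrow> ((nat \<Rightarrow> 'e) \<times> (nat \<Rightarrow> 'e)) set" where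
  "omrel RS = {(\<omega>, \<omega>'). \<omega> \<in> Omega RS \<and> \<omega>' \<in> Omega RS \<and>
      (\<forall>n. ends (Gn RS n) (pref \<omega> n) \<inter> ends (Gn RS n) (pref \<omega>' n) \<noteq> {})}"

definition Xsp :: "('v,'e) repsys \<Rightarrow> (nat \<Rightarrow> 'e) set set" where
  "Xsp RS = Omega RS // omrel RS"

definition cls :: "('v,'e) repsys \<Rightarrow> (nat \<Rightarrow> 'e) \<Rightarrow> (nat \<Rightarrow> 'e) set" where
  "cls RS \<omega> = omrel RS `` {\<omega>}"

definition Omega_top :: "('v,'e) repsys \<Rightarrow> (nat \<Rightarrow> 'e) topology" where
  "Omega_top RS = subtopology (product_topology (\<lambda>n. discrete_topology UNIV) UNIV) (Omega RS)"

definition X_open :: "('v,'e) repsys \<Rightarrow> (nat \<Rightarrow> 'e) set set \<Rightarrow> bool" where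
  "X_open RS U \<longleftrightarrow> U \<subseteq> Xsp RS \<and> openin (Omega_top RS) {\<omega> \<in> Omega RS. cls RS \<omega> \<in> U}"

lemma istopology_X_open: "istopology (X_open RS)"
  unfolding istopology_def
proof (intro conjI allI impI)
  fix S T assume "X_open RS S" "X_open RS T"
  then show "X_open RS (S \<inter> T)"
    unfolding X_open_def
    by (auto dest: openin_Int simp: Collect_conj_eq[symmetric] conj_assoc
        intro: back_subst[where P="openin (Omega_top RS)"])
next
  fix K assume K: "\<forall>S\<in>K. X_open RS S"
  have "{\<omega> \<in> Omega RS. cls RS \<omega> \<in> \<Union>K} = (\<Union>S\<in>K. {\<omega> \<in> Omega RS. cls RS \<omega> \<in> S})" by auto
  moreover have "openin (Omega_top RS) (\<Union>S\<in>K. {\<omega> \<in> Omega RS. cls RS \<omega> \<in> S})"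
    using K unfolding X_open_def by auto
  ultimately show "X_open RS (\<Union>K)" using K unfolding X_open_def by auto
qed

definition X_top :: "('v,'e) repsys \<Rightarrow> (nat \<Rightarrow> 'e) set topology" where
  "X_top RS = topology (X_open RS)"

text \<open>Words that are edges of some expansion (equivalently of G_n, n = length - 1).\<close>
definition valid_word :: "('v,'e) repsys \<Rightarrow> 'e list \<Rightarrow> bool" where
  "valid_word RS w \<longleftrightarrow> w \<noteq> [] \<and> hd w \<in> arcs (base RS) \<and> set (tl w) \<subseteq> arcs (rep RS)"

definition cell :: "('v,'e) repsys \<Rightarrow> 'e list \<Rightarrow> (nat \<Rightarrow> 'e) set set" where
  "cell RS w = cls RS ` {\<omega> \<in> Omega RS. pref \<omega> (length w - 1) = w}"

text \<open>The point of X represented by a vertex v: sequences whose edges eventually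
  are all incident to v.\<close>
definition vpoint :: "('v,'e) repsys \<Rightarrow> 'e list \<times> 'v \<Rightarrow> (nat \<Rightarrow> 'e) set set" where
  "vpoint RS v = {cls RS \<omega> | \<omega>. \<omega> \<in> Omega RS \<and> (\<exists>N. \<forall>m\<ge>N. v \<in> ends (Gn RS m) (pref \<omega> m))}"

definition cell_interior :: "('v,'e) repsys \<Rightarrow> 'e list \<Rightarrow> (nat \<Rightarrow> 'e) set set" where
  "cell_interior RS w = cell RS w -
     (vpoint RS (tail (Gn RS (length w - 1)) w) \<union> vpoint RS (head (Gn RS (length w - 1)) w))"

definition is_loop :: "('v,'e) repsys \<Rightarrow> 'e list \<Rightarrow> bool" where
  "is_loop RS w \<longleftrightarrow> tail (Gn RS (length w - 1)) w = head (Gn RS (length w - 1)) w"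

definition reprefix :: "'e list \<Rightarrow> 'e list \<Rightarrow> (nat \<Rightarrow> 'e) \<Rightarrow> (nat \<Rightarrow> 'e)" where
  "reprefix w w' \<omega> = (\<lambda>i. if i < length w' then w' ! i else \<omega> (i - length w' + length w))"

definition canonical_on :: "('v,'e) repsys \<Rightarrow> ((nat \<Rightarrow> 'e) set \<Rightarrow> (nat \<Rightarrow> 'e) set) \<Rightarrow> 'e list \<Rightarrow> 'e list \<Rightarrow> bool" where
  "canonical_on RS f w w' \<longleftrightarrow> (is_loop RS w \<longleftrightarrow> is_loop RS w') \<and>
     (\<forall>\<omega>\<in>Omega RS. pref \<omega> (length w - 1) = w \<longrightarrow> f (cls RS \<omega>) = cls RS (reprefix w w' \<omega>))"

definition rearrangement :: "('v,'e) repsys \<Rightarrow> ((nat \<Rightarrow> 'e) set \<Rightarrow> (nat \<Rightarrow> 'e) set) \<Rightarrow> bool" where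
  "rearrangement RS f \<longleftrightarrow> f \<in> extensional (Xsp RS) \<and> homeomorphic_map (X_top RS) (X_top RS) f \<and>
     (\<exists>S. finite S \<and> (\<forall>w\<in>S. valid_word RS w) \<and> \<Union>(cell RS ` S) = Xsp RS \<and>
        (\<forall>w\<in>S. \<forall>w'\<in>S. w \<noteq> w' \<longrightarrow> cell_interior RS w \<inter> cell_interior RS w' = {}) \<and>
        (\<forall>w\<in>S. \<exists>w'. valid_word RS w' \<and> canonical_on RS f w w'))"

text \<open>The rearrangement group (functions are extensional on X).\<close>
definition rearr_group :: "('v,'e) repsys \<Rightarrow> ((nat \<Rightarrow> 'e) set \<Rightarrow> (nat \<Rightarrow> 'e) set) monoid" where
  "rearr_group RS = \<lparr>carrier = {f. rearrangement RS f},
                     monoid.mult = (\<lambda>f g. compose (Xsp RS) f g),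
                     one = restrict id (Xsp RS)\<rparr>"

definition Aut_R :: "('v,'e) repsys \<Rightarrow> ('v,'e) xgraph \<Rightarrow> ((nat \<Rightarrow> 'e) set \<Rightarrow> (nat \<Rightarrow> 'e) set) set" where
  "Aut_R RS E = {f \<in> carrier (rearr_group RS). \<exists>\<phi>v \<phi>e.
      bij_betw \<phi>v (verts E) (verts E) \<and> bij_betw \<phi>e (arcs E) (arcs E) \<and>
      (\<forall>x\<in>arcs E. tail E (\<phi>e x) = \<phi>v (tail E x) \<and> head E (\<phi>e x) = \<phi>v (head E x)) \<and>
      (\<forall>x\<in>arcs E. canonical_on RS f x (\<phi>e x))}"

end

theory Submission
  imports Defs "HOL-Library.Sublist"
begin


lemma prefix_eq_len: "prefix a b \<Longrightarrow> length a = length b \<Longrightarrow> a = b"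
  by (auto simp: prefix_def)

locale XP =
  fixes RS :: "('v,'e) repsys"
  assumes ex: "expanding RS"
begin

abbreviation "RR \<equiv> rep RS"
abbreviation "B0 \<equiv> base RS"
abbreviation "ii \<equiv> ini RS"
abbreviation "tt \<equiv> ter RS"

definition T where "T w = tail (Gn RS (length w - 1)) w"
definition Hd where "Hd w = head (Gn RS (length w - 1)) w"
definition EN where "EN w = {T w, Hd w}"
definition vm :: "'e list \<Rightarrow> 'v \<Rightarrow> 'e list \<times> 'v" where
  "vm w r = (if r = ii then T w else if r = tt then Hd w else (w, r))"

lemma ii_ne_tt: "ii \<noteq> tt" using ex unfolding expanding_def replacement_system_def by auto
lemma ii_in: "ii \<in> verts RR" using ex unfolding expanding_def replacement_system_def by auto
lemma tt_in: "tt \<in> verts RR" using ex unfolding expanding_def replacement_system_def by auto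
lemma wfR: "wf_graph RR" using ex unfolding expanding_def replacement_system_def by auto
lemma wfB: "wf_graph B0" using ex unfolding expanding_def replacement_system_def by auto
lemma noisoR: "no_isolated RR" using ex unfolding expanding_def by auto
lemma noisoB: "no_isolated B0" using ex unfolding expanding_def by auto
lemma nonadj: "z \<in> arcs RR \<Longrightarrow> {tail RR z, head RR z} \<noteq> {ii, tt}" using ex unfolding expanding_def by auto
lemma card3: "card (verts RR) \<ge> 3" using ex unfolding expanding_def by auto
lemma card2: "card (arcs RR) \<ge> 2" using ex unfolding expanding_def by auto
lemma finR: "finite (arcs RR)" using wfR unfolding wf_graph_def by auto
lemma finVR: "finite (verts RR)" using wfR unfolding wf_graph_def by auto
lemma finB: "finite (arcs B0)" using wfB unfolding wf_graph_def by auto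
lemma tailR: "z \<in> arcs RR \<Longrightarrow> tail RR z \<in> verts RR" using wfR unfolding wf_graph_def by auto
lemma headR: "z \<in> arcs RR \<Longrightarrow> head RR z \<in> verts RR" using wfR unfolding wf_graph_def by auto

lemma T_snoc: "w \<noteq> [] \<Longrightarrow> T (w @ [z]) = vm w (tail RR z)"
proof -
  assume "w \<noteq> []"
  then obtain n where n: "length w = Suc n" by (cases w) auto
  then show ?thesis unfolding T_def vm_def Hd_def
    by (simp add: replace_all_def vmap_def)
qed

lemma Hd_snoc: "w \<noteq> [] \<Longrightarrow> Hd (w @ [z]) = vm w (head RR z)"
proof -
  assume "w \<noteq> []"
  then obtain n where n: "length w = Suc n" by (cases w) auto
  then show ?thesis unfolding T_def vm_def Hd_def
    by (simp add: replace_all_def vmap_def)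
qed

lemma T_single: "T [a] = ([], tail B0 a)" by (simp add: T_def lift0_def)
lemma Hd_single: "Hd [a] = ([], head B0 a)" by (simp add: Hd_def lift0_def)

lemma EN_snoc: "w \<noteq> [] \<Longrightarrow> EN (w @ [z]) = {vm w (tail RR z), vm w (head RR z)}"
  by (simp add: EN_def T_snoc Hd_snoc)

lemma vm_cases: "vm w r \<in> EN w \<or> vm w r = (w, r)"
  by (auto simp: vm_def EN_def)

lemma EN_snoc_sub: "w \<noteq> [] \<Longrightarrow> v \<in> EN (w @ [z]) \<Longrightarrow> v \<in> EN w \<or> fst v = w"
  using vm_cases[of w "tail RR z"] vm_cases[of w "head RR z"] by (auto simp: EN_snoc)

lemma EN_label: "w \<noteq> [] \<Longrightarrow> v \<in> EN w \<Longrightarrow> strict_prefix (fst v) w"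
proof (induction w arbitrary: v rule: rev_induct)
  case Nil then show ?case by simp
next
  case (snoc z w)
  show ?case
  proof (cases "w = []")
    case True
    then show ?thesis using snoc.prems by (auto simp: EN_def T_single Hd_single strict_prefix_def)
  next
    case False
    from EN_snoc_sub[OF False snoc.prems(2)] show ?thesis
    proof
      assume "v \<in> EN w"
      then have "strict_prefix (fst v) w" using snoc.IH False by blast
      moreover have "prefix w (w @ [z])" by simp
      ultimately show ?thesis using prefix_order.less_le_trans by blast
    next
      assume "fst v = w" then show ?thesis by (simp add: strict_prefix_def)
    qed
  qed
qed

lemma EN_label_len: "w \<noteq> [] \<Longrightarrow> v \<in> EN w \<Longrightarrow> length (fst v) < length w"
  using EN_label prefix_length_less by blast

lemma EN_app_sub: "w \<noteq> [] \<Longrightarrow> v \<in> EN (w @ r) \<Longrightarrow> v \<in> EN w \<or> prefix w (fst v)"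
proof (induction r arbitrary: v rule: rev_induct)
  case Nil then show ?case by simp
next
  case (snoc z r)
  have "w @ r \<noteq> []" using snoc.prems by simp
  from EN_snoc_sub[OF this] snoc.prems(2) have "v \<in> EN (w @ r) \<or> fst v = w @ r" by simp
  then show ?case
  proof
    assume "v \<in> EN (w @ r)" then show ?thesis using snoc.IH snoc.prems(1) by blast
  next
    assume "fst v = w @ r" then show ?thesis by simp
  qed
qed

lemma EN_down: "w \<noteq> [] \<Longrightarrow> v \<in> EN (w @ r) \<Longrightarrow> length (fst v) < length w \<Longrightarrow> v \<in> EN w"
proof -
  assume a: "w \<noteq> []" "v \<in> EN (w @ r)" "length (fst v) < length w"
  have "\<not> prefix w (fst v)" using a(3) prefix_length_le by (metis leD)
  then show ?thesis using EN_app_sub[OF a(1,2)] by blast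
qed

lemma EN_sep: "length p1 = length p2 \<Longrightarrow> p1 \<noteq> p2 \<Longrightarrow> p1 \<noteq> [] \<Longrightarrow>
   v \<in> EN (p1 @ r1) \<Longrightarrow> v \<in> EN (p2 @ r2) \<Longrightarrow> v \<in> EN p1 \<and> v \<in> EN p2"
proof -
  assume a: "length p1 = length p2" "p1 \<noteq> p2" "p1 \<noteq> []" "v \<in> EN (p1 @ r1)" "v \<in> EN (p2 @ r2)"
  have p2: "p2 \<noteq> []" using a by auto
  from EN_app_sub[OF a(3) a(4)] EN_app_sub[OF p2 a(5)]
  have "(v \<in> EN p1 \<or> prefix p1 (fst v)) \<and> (v \<in> EN p2 \<or> prefix p2 (fst v))" by blast
  moreover have "\<not> (prefix p1 (fst v) \<and> prefix p2 (fst v))"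
    using prefix_length_prefix[of p1 "fst v" p2] a(1,2) prefix_eq_len by auto
  moreover have "\<not> (prefix p1 (fst v) \<and> v \<in> EN p2)"
  proof
    assume h: "prefix p1 (fst v) \<and> v \<in> EN p2"
    then have "length p1 \<le> length (fst v)" by (simp add: prefix_length_le)
    moreover have "length (fst v) < length p2" using EN_label_len[OF p2] h by blast
    ultimately show False using a(1) by simp
  qed
  moreover have "\<not> (prefix p2 (fst v) \<and> v \<in> EN p1)"
  proof
    assume h: "prefix p2 (fst v) \<and> v \<in> EN p1"
    then have "length p2 \<le> length (fst v)" by (simp add: prefix_length_le)
    moreover have "length (fst v) < length p1" using EN_label_len[OF a(3)] h by blast
    ultimately show False using a(1) by simp
  qed
  ultimately show ?thesis by blast
qed

lemma loop_snoc: assumes "w \<noteq> []" "z \<in> arcs RR"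
  shows "(T (w @ [z]) = Hd (w @ [z])) \<longleftrightarrow> tail RR z = head RR z"
proof -
  have lab: "\<And>x. T w \<noteq> (w, x) \<and> Hd w \<noteq> (w, x) \<and> (w, x) \<noteq> T w \<and> (w, x) \<noteq> Hd w"
  proof -
    have l1: "length (fst (T w)) < length w" "length (fst (Hd w)) < length w"
      using EN_label_len[OF assms(1)] by (auto simp: EN_def)
    fix x show "T w \<noteq> (w, x) \<and> Hd w \<noteq> (w, x) \<and> (w, x) \<noteq> T w \<and> (w, x) \<noteq> Hd w"
      using l1 by (metis fst_conv less_irrefl)
  qed
  show ?thesis
    using nonadj[OF assms(2)] ii_ne_tt lab
    unfolding T_snoc[OF assms(1)] Hd_snoc[OF assms(1)] vm_def EN_def
    by (auto split: if_splits)
qed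

end


definition lapp :: "'e list \<Rightarrow> (nat \<Rightarrow> 'e) \<Rightarrow> (nat \<Rightarrow> 'e)" where
  "lapp xs t = (\<lambda>i. if i < length xs then xs ! i else t (i - length xs))"

definition hasp :: "(nat \<Rightarrow> 'e) \<Rightarrow> 'e list \<Rightarrow> bool" where
  "hasp \<omega> w \<longleftrightarrow> w \<noteq> [] \<and> (\<forall>i<length w. \<omega> i = w ! i)"

lemma length_pref[simp]: "length (pref \<omega> n) = Suc n" by (simp add: pref_def)
lemma pref_nonempty[simp]: "pref \<omega> n \<noteq> []" by (simp add: pref_def)
lemma nth_pref: "i \<le> n \<Longrightarrow> pref \<omega> n ! i = \<omega> i" by (simp add: pref_def nth_map_upt del: upt_Suc)
lemma pref_Suc: "pref \<omega> (Suc n) = pref \<omega> n @ [\<omega> (Suc n)]" by (simp add: pref_def)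
lemma pref_0: "pref \<omega> 0 = [\<omega> 0]" by (simp add: pref_def)

lemma pref_eq_hasp: "w \<noteq> [] \<Longrightarrow> pref \<omega> (length w - 1) = w \<longleftrightarrow> hasp \<omega> w"
proof -
  assume "w \<noteq> []"
  then have l: "Suc (length w - 1) = length w" by (cases w) auto
  have "pref \<omega> (length w - 1) = map \<omega> [0..<length w]" unfolding pref_def l ..
  moreover have "map \<omega> [0..<length w] = w \<longleftrightarrow> (\<forall>i<length w. \<omega> i = w ! i)"
  proof -
    have "map \<omega> [0..<length w] = w \<longleftrightarrow> map \<omega> [0..<length w] = map ((!) w) [0..<length w]"
      by (simp only: map_nth)
    also have "\<dots> \<longleftrightarrow> (\<forall>i\<in>set [0..<length w]. \<omega> i = w ! i)" by (rule map_eq_conv)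
    finally show ?thesis by (simp add: atLeastLessThan_iff Ball_def)
  qed
  ultimately show ?thesis using \<open>w \<noteq> []\<close> by (simp add: hasp_def)
qed

lemma hasp_pref: "hasp \<omega> (pref \<omega> n)"
  by (simp add: hasp_def nth_pref)

lemma hasp_pref_eq: "hasp \<omega> w \<Longrightarrow> pref \<omega> (length w - 1) = w"
  using pref_eq_hasp[of w \<omega>] hasp_def by blast

lemma pref_app: "n \<le> m \<Longrightarrow> \<exists>r. pref \<omega> m = pref \<omega> n @ r"
proof (induction m)
  case 0 then show ?case by auto
next
  case (Suc m)
  show ?case
  proof (cases "n \<le> m")
    case True then show ?thesis using Suc.IH by (auto simp: pref_Suc)
  next
    case False then have "n = Suc m" using Suc.prems by simp
    then show ?thesis by auto
  qed
qed

lemma hasp_prefix: "hasp \<omega> w \<Longrightarrow> hasp \<omega> w' \<Longrightarrow> prefix w w' \<or> prefix w' w"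
proof -
  assume a: "hasp \<omega> w" "hasp \<omega> w'"
  have "w = pref \<omega> (length w - 1)" "w' = pref \<omega> (length w' - 1)" using a hasp_pref_eq by metis+
  then show ?thesis
  proof (cases "length w \<le> length w'")
    case True
    then obtain r where "pref \<omega> (length w' - 1) = pref \<omega> (length w - 1) @ r"
      using pref_app[of "length w - 1" "length w' - 1" \<omega>] diff_le_mono[OF True] by blast
    then show ?thesis using \<open>w = _\<close> \<open>w' = _\<close> by (metis prefixI)
  next
    case False
    then obtain r where "pref \<omega> (length w - 1) = pref \<omega> (length w' - 1) @ r"
      using pref_app[of "length w' - 1" "length w - 1" \<omega>] diff_le_mono[of "length w'" "length w" 1] False by fastforce
    then show ?thesis using \<open>w = _\<close> \<open>w' = _\<close> by (metis prefixI)
  qed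
qed

lemma hasp_mono: "hasp \<omega> w' \<Longrightarrow> prefix w w' \<Longrightarrow> w \<noteq> [] \<Longrightarrow> hasp \<omega> w"
  unfolding hasp_def prefix_def by (auto simp: nth_append)

lemma hasp_lapp: "xs \<noteq> [] \<Longrightarrow> hasp (lapp xs t) xs" by (simp add: hasp_def lapp_def)

lemma lapp_assoc: "lapp xs (lapp ys t) = lapp (xs @ ys) t"
  by (auto simp: lapp_def nth_append fun_eq_iff)

lemma pref_lapp: "xs \<noteq> [] \<Longrightarrow> pref (lapp xs t) (length xs - 1 + k) = xs @ map t [0..<k]"
proof -
  assume "xs \<noteq> []"
  then have l: "Suc (length xs - 1 + k) = length xs + k" by (cases xs) auto
  show ?thesis unfolding pref_def l
    by (rule nth_equalityI) (simp_all add: nth_append lapp_def del: upt_Suc upt_add_eq_append)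
qed
lemma reprefix_lapp: "length w = length xs \<Longrightarrow> reprefix w u (lapp xs t) = lapp u t"
  unfolding reprefix_def lapp_def fun_eq_iff
proof (intro allI)
  fix i assume "length w = length xs"
  then show "(if i < length u then u ! i else if i - length u + length w < length xs then xs ! (i - length u + length w) else t (i - length u + length w - length xs)) =
    (if i < length u then u ! i else t (i - length u))"
    by (cases "i < length u") auto
qed

lemma reprefix_eq: "reprefix w u \<omega> = lapp u (\<lambda>i. \<omega> (i + length w))"
  by (auto simp: reprefix_def lapp_def fun_eq_iff)

context XP begin

lemma valid_pref: "\<omega> \<in> Omega RS \<Longrightarrow> valid_word RS (pref \<omega> n)"
proof -
  assume O: "\<omega> \<in> Omega RS"
  have e: "pref \<omega> n = \<omega> 0 # map \<omega> [1..<Suc n]" by (simp add: pref_def upt_conv_Cons del: upt_Suc)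
  have "\<omega> j \<in> arcs RR" if "j \<in> {1..<Suc n}" for j
  proof -
    have "j \<ge> 1" using that by simp
    then obtain k where "j = Suc k" by (cases j) auto
    then show ?thesis using O by (simp add: Omega_def)
  qed
  then show ?thesis using O unfolding valid_word_def e by (auto simp: Omega_def)
qed

lemma valid_hasp: "\<omega> \<in> Omega RS \<Longrightarrow> hasp \<omega> w \<Longrightarrow> valid_word RS w"
  using valid_pref hasp_pref_eq by metis

lemma lapp_Omega: "valid_word RS xs \<Longrightarrow> (\<And>i. t i \<in> arcs RR) \<Longrightarrow> lapp xs t \<in> Omega RS"
proof -
  assume v: "valid_word RS xs" and t: "\<And>i. t i \<in> arcs RR"
  obtain a ys where xs: "xs = a # ys" using v by (cases xs) (auto simp: valid_word_def)
  have a: "a \<in> arcs B0" and ys: "set ys \<subseteq> arcs RR" using v by (auto simp: valid_word_def xs)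
  have "lapp xs t (Suc n) \<in> arcs RR" for n
  proof (cases "Suc n < length xs")
    case True
    then have "lapp xs t (Suc n) = ys ! n" by (simp add: lapp_def xs)
    moreover have "n < length ys" using True xs by simp
    ultimately show ?thesis using ys nth_mem by fastforce
  next
    case False then show ?thesis by (simp add: lapp_def t)
  qed
  moreover have "lapp xs t 0 \<in> arcs B0" using a by (simp add: lapp_def xs)
  ultimately show ?thesis by (simp add: Omega_def)
qed

lemma omrel_iff: "(\<omega>, \<omega>') \<in> omrel RS \<longleftrightarrow> \<omega> \<in> Omega RS \<and> \<omega>' \<in> Omega RS \<and>
   (\<forall>n. EN (pref \<omega> n) \<inter> EN (pref \<omega>' n) \<noteq> {})"
  unfolding omrel_def ends_def EN_def T_def Hd_def by simp

lemma omrel_refl: "\<omega> \<in> Omega RS \<Longrightarrow> (\<omega>, \<omega>) \<in> omrel RS"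
  unfolding omrel_iff EN_def by auto

lemma omrel_sym: "(\<omega>, \<omega>') \<in> omrel RS \<Longrightarrow> (\<omega>', \<omega>) \<in> omrel RS"
  unfolding omrel_iff by auto

lemma vm_old: "w \<noteq> [] \<Longrightarrow> v \<in> EN w \<Longrightarrow> v = vm w r \<Longrightarrow> r = ii \<or> r = tt"
  using EN_label_len[of w v] unfolding vm_def by (auto split: if_splits)

lemma omrel_trans: assumes "(\<omega>1, \<omega>2) \<in> omrel RS" "(\<omega>2, \<omega>3) \<in> omrel RS"
  shows "(\<omega>1, \<omega>3) \<in> omrel RS"
proof -
  have O: "\<omega>1 \<in> Omega RS" "\<omega>2 \<in> Omega RS" "\<omega>3 \<in> Omega RS" using assms omrel_iff by auto
  have c12: "\<And>n. EN (pref \<omega>1 n) \<inter> EN (pref \<omega>2 n) \<noteq> {}" using assms omrel_iff by auto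
  have c23: "\<And>n. EN (pref \<omega>2 n) \<inter> EN (pref \<omega>3 n) \<noteq> {}" using assms omrel_iff by auto
  have "EN (pref \<omega>1 n) \<inter> EN (pref \<omega>3 n) \<noteq> {}" for n
  proof (rule ccontr)
    assume dis: "\<not> EN (pref \<omega>1 n) \<inter> EN (pref \<omega>3 n) \<noteq> {}"
    have ne12: "pref \<omega>1 n \<noteq> pref \<omega>2 n" using dis c23[of n] by auto
    have ne23: "pref \<omega>2 n \<noteq> pref \<omega>3 n" using dis c12[of n] by auto
    obtain v where v: "v \<in> EN (pref \<omega>1 (Suc n))" "v \<in> EN (pref \<omega>2 (Suc n))" using c12[of "Suc n"] by auto
    obtain v' where v': "v' \<in> EN (pref \<omega>2 (Suc n))" "v' \<in> EN (pref \<omega>3 (Suc n))" using c23[of "Suc n"] by auto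
    have vv: "v \<in> EN (pref \<omega>2 n)" "v \<in> EN (pref \<omega>1 n)"
      using EN_sep[of "pref \<omega>1 n" "pref \<omega>2 n" v] ne12 v by (auto simp: pref_Suc)
    have vv': "v' \<in> EN (pref \<omega>2 n)" "v' \<in> EN (pref \<omega>3 n)"
      using EN_sep[of "pref \<omega>2 n" "pref \<omega>3 n" v'] ne23 v' by (auto simp: pref_Suc)
    have "v \<noteq> v'" using dis vv vv' by auto
    define z where "z = \<omega>2 (Suc n)"
    have z: "z \<in> arcs RR" using O(2) unfolding Omega_def z_def by auto
    have E2: "EN (pref \<omega>2 (Suc n)) = {vm (pref \<omega>2 n) (tail RR z), vm (pref \<omega>2 n) (head RR z)}"
      by (simp add: pref_Suc EN_snoc z_def)
    have t: "tail RR z = ii \<or> tail RR z = tt" and h: "head RR z = ii \<or> head RR z = tt"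
      and th: "tail RR z \<noteq> head RR z"
      using vm_old[of "pref \<omega>2 n" v] vm_old[of "pref \<omega>2 n" v'] v(2) v'(1) vv(1) vv'(1) \<open>v \<noteq> v'\<close>
      unfolding E2 by auto
    then have "{tail RR z, head RR z} = {ii, tt}" by auto
    then show False using nonadj[OF z] by simp
  qed
  then show ?thesis using O omrel_iff by auto
qed

lemma cls_mem: "(\<omega>, \<omega>') \<in> omrel RS \<longleftrightarrow> \<omega>' \<in> cls RS \<omega>" by (simp add: cls_def)

lemma cls_self: "\<omega> \<in> Omega RS \<Longrightarrow> \<omega> \<in> cls RS \<omega>" using omrel_refl cls_mem by blast

lemma cls_eq: "(\<omega>, \<omega>') \<in> omrel RS \<Longrightarrow> cls RS \<omega> = cls RS \<omega>'"
  unfolding cls_def using omrel_sym omrel_trans by blast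

lemma cls_eqD: "\<omega>' \<in> Omega RS \<Longrightarrow> cls RS \<omega> = cls RS \<omega>' \<Longrightarrow> (\<omega>, \<omega>') \<in> omrel RS"
  using cls_self cls_mem by blast

lemma cls_Xsp: "\<omega> \<in> Omega RS \<Longrightarrow> cls RS \<omega> \<in> Xsp RS"
  unfolding Xsp_def cls_def by (rule quotientI)

lemma Xsp_cls: "p \<in> Xsp RS \<Longrightarrow> \<exists>\<omega>\<in>Omega RS. p = cls RS \<omega>"
  unfolding Xsp_def cls_def by (auto elim: quotientE)

end


lemma pref_lapp_short: "n < length x \<Longrightarrow> pref (lapp x t) n = take (Suc n) x"
  unfolding pref_def lapp_def
  by (rule nth_equalityI) (simp_all del: upt_Suc)

context XP begin

definition gen where "gen \<omega> \<longleftrightarrow> (\<forall>n. \<exists>m. \<forall>v\<in>EN (pref \<omega> m). n < length (fst v))"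

lemma gen_single: assumes "gen \<omega>" "(\<omega>, \<omega>') \<in> omrel RS" shows "\<omega>' = \<omega>"
proof (rule ccontr)
  assume "\<omega>' \<noteq> \<omega>"
  then obtain i where i: "\<omega> i \<noteq> \<omega>' i" by (metis ext)
  obtain m where m: "\<forall>v\<in>EN (pref \<omega> m). i < length (fst v)" using assms(1) gen_def by blast
  have "T (pref \<omega> m) \<in> EN (pref \<omega> m)" by (simp add: EN_def)
  then have "length (fst (T (pref \<omega> m))) < Suc m" using EN_label_len[of "pref \<omega> m"] by simp
  then have im: "i \<le> m" using m \<open>T (pref \<omega> m) \<in> EN (pref \<omega> m)\<close> by fastforce
  obtain r where r: "pref \<omega> m = pref \<omega> i @ r" using pref_app[OF im] by blast
  obtain r' where r': "pref \<omega>' m = pref \<omega>' i @ r'" using pref_app[OF im] by blast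
  have ne: "pref \<omega> i \<noteq> pref \<omega>' i" using i nth_pref[of i i \<omega>] nth_pref[of i i \<omega>'] by (metis le_refl)
  obtain v where v: "v \<in> EN (pref \<omega> m)" "v \<in> EN (pref \<omega>' m)" using assms(2) omrel_iff by blast
  have "v \<in> EN (pref \<omega> i)" using EN_sep[of "pref \<omega> i" "pref \<omega>' i" v r r'] ne v r r' by simp
  then have "length (fst v) < Suc i" using EN_label_len[of "pref \<omega> i"] by simp
  then show False using m v(1) by fastforce
qed

lemma internal_ex: "\<exists>u\<in>verts RR. u \<noteq> ii \<and> u \<noteq> tt"
proof (rule ccontr)
  assume "\<not> ?thesis"
  then have "verts RR \<subseteq> {ii, tt}" by auto
  then have "card (verts RR) \<le> card {ii, tt}" by (simp add: card_mono)
  also have "\<dots> \<le> 2" by (simp add: card_insert_le_m1)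
  finally show False using card3 by simp
qed

lemma vm_Er: "vm x ii = T x" "vm x tt = Hd x" using ii_ne_tt by (auto simp: vm_def)

lemma block_ex: "\<exists>z1 z2. z1 \<in> arcs RR \<and> z2 \<in> arcs RR \<and>
   (\<forall>x. x \<noteq> [] \<longrightarrow> (\<forall>v\<in>EN ((x @ [z1]) @ [z2]). length x \<le> length (fst v)))"
proof -
  obtain u where u: "u \<in> verts RR" "u \<noteq> ii" "u \<noteq> tt" using internal_ex by blast
  obtain z1 where z1: "z1 \<in> arcs RR" "u = tail RR z1 \<or> u = head RR z1"
    using noisoR u(1) unfolding no_isolated_def by blast
  show ?thesis
  proof (cases "tail RR z1 \<noteq> ii \<and> tail RR z1 \<noteq> tt")
    case True
    obtain z2 where z2: "z2 \<in> arcs RR" "ii = tail RR z2 \<or> ii = head RR z2"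
      using noisoR ii_in unfolding no_isolated_def by blast
    have nt: "tail RR z2 \<noteq> tt" "head RR z2 \<noteq> tt" using z2 nonadj[OF z2(1)] ii_ne_tt by auto
    have "length x \<le> length (fst v)" if x: "x \<noteq> []" and v: "v \<in> EN ((x @ [z1]) @ [z2])" for x v
    proof -
      have key: "length x \<le> length (fst (vm (x @ [z1]) r))" if "r \<noteq> tt" for r
        using that True unfolding vm_def by (simp add: T_snoc[OF x] vm_def)
      have ne: "x @ [z1] \<noteq> []" by simp
      show ?thesis using v unfolding EN_snoc[OF ne] using key nt by auto
    qed
    then show ?thesis using z1 z2 by blast
  next
    case False
    then have hz: "head RR z1 \<noteq> ii" "head RR z1 \<noteq> tt" using z1 u by auto
    obtain z2 where z2: "z2 \<in> arcs RR" "tt = tail RR z2 \<or> tt = head RR z2"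
      using noisoR tt_in unfolding no_isolated_def by blast
    have nt: "tail RR z2 \<noteq> ii" "head RR z2 \<noteq> ii" using z2 nonadj[OF z2(1)] ii_ne_tt by auto
    have "length x \<le> length (fst v)" if x: "x \<noteq> []" and v: "v \<in> EN ((x @ [z1]) @ [z2])" for x v
    proof -
      have key: "length x \<le> length (fst (vm (x @ [z1]) r))" if "r \<noteq> ii" for r
        using that hz ii_ne_tt unfolding vm_def by (simp add: Hd_snoc[OF x] vm_def)
      have ne: "x @ [z1] \<noteq> []" by simp
      show ?thesis using v unfolding EN_snoc[OF ne] using key nt by auto
    qed
    then show ?thesis using z1 z2 by blast
  qed
qed

definition "zz = (SOME p. fst p \<in> arcs RR \<and> snd p \<in> arcs RR \<and>
   (\<forall>x. x \<noteq> [] \<longrightarrow> (\<forall>v\<in>EN ((x @ [fst p]) @ [snd p]). length x \<le> length (fst v))))"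

lemma zz: "fst zz \<in> arcs RR" "snd zz \<in> arcs RR"
   "\<And>x v. x \<noteq> [] \<Longrightarrow> v \<in> EN ((x @ [fst zz]) @ [snd zz]) \<Longrightarrow> length x \<le> length (fst v)"
proof -
  obtain z1 z2 where "z1 \<in> arcs RR \<and> z2 \<in> arcs RR \<and>
   (\<forall>x. x \<noteq> [] \<longrightarrow> (\<forall>v\<in>EN ((x @ [z1]) @ [z2]). length x \<le> length (fst v)))"
    using block_ex by blast
  then have "fst (z1, z2) \<in> arcs RR \<and> snd (z1, z2) \<in> arcs RR \<and>
   (\<forall>x. x \<noteq> [] \<longrightarrow> (\<forall>v\<in>EN ((x @ [fst (z1,z2)]) @ [snd (z1,z2)]). length x \<le> length (fst v)))"
    by simp
  then have P: "fst zz \<in> arcs RR \<and> snd zz \<in> arcs RR \<and>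
   (\<forall>x. x \<noteq> [] \<longrightarrow> (\<forall>v\<in>EN ((x @ [fst zz]) @ [snd zz]). length x \<le> length (fst v)))"
    unfolding zz_def by (rule someI)
  then show "fst zz \<in> arcs RR" "snd zz \<in> arcs RR" by auto
  show "\<And>x v. x \<noteq> [] \<Longrightarrow> v \<in> EN ((x @ [fst zz]) @ [snd zz]) \<Longrightarrow> length x \<le> length (fst v)"
    using P by blast
qed

definition bs :: "nat \<Rightarrow> 'e" where "bs i = (if even i then fst zz else snd zz)"

lemma bs_in: "bs i \<in> arcs RR" using zz by (simp add: bs_def)

definition "cc = (SOME c. c \<in> arcs RR \<and> c \<noteq> fst zz)"

lemma cc: "cc \<in> arcs RR" "cc \<noteq> fst zz"
proof -
  have "\<exists>c. c \<in> arcs RR \<and> c \<noteq> fst zz"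
  proof (rule ccontr)
    assume "\<not> ?thesis"
    then have "arcs RR \<subseteq> {fst zz}" by auto
    then have "card (arcs RR) \<le> card {fst zz}" by (rule card_mono[rotated]) simp
    then show False using card2 by simp
  qed
  then obtain c where "c \<in> arcs RR \<and> c \<noteq> fst zz" by blast
  then have "cc \<in> arcs RR \<and> cc \<noteq> fst zz" unfolding cc_def by (rule someI)
  then show "cc \<in> arcs RR" "cc \<noteq> fst zz" by auto
qed

lemma gen_lapp: assumes "y \<noteq> []" shows "gen (lapp y bs)"
  unfolding gen_def
proof
  fix n
  define \<omega> where "\<omega> = lapp y bs"
  define k where "k = length y + 2 * n"
  have k1: "k \<ge> 1" "n < k" using assms by (cases y, auto simp: k_def)+
  define x where "x = pref \<omega> (k - 1)"
  have xl: "length x = k" using k1 by (simp add: x_def)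
  have "\<omega> k = fst zz" "\<omega> (Suc k) = snd zz" by (simp_all add: \<omega>_def lapp_def k_def bs_def)
  moreover have "pref \<omega> (Suc k) = (x @ [\<omega> k]) @ [\<omega> (Suc k)]"
  proof -
    have kk: "k = Suc (k - 1)" using k1 by simp
    have "pref \<omega> k = x @ [\<omega> k]" using pref_Suc[of \<omega> "k-1"] kk x_def by metis
    then show ?thesis by (simp only: pref_Suc)
  qed
  ultimately have e: "pref \<omega> (Suc k) = (x @ [fst zz]) @ [snd zz]" by simp
  have "x \<noteq> []" by (simp add: x_def)
  then have "\<forall>v\<in>EN (pref \<omega> (Suc k)). n < length (fst v)"
    using zz(3)[of x] e xl k1 by fastforce
  then show "\<exists>m. \<forall>v\<in>EN (pref (lapp y bs) m). n < length (fst v)" unfolding \<omega>_def by blast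
qed

definition gseq :: "'e list \<Rightarrow> nat \<Rightarrow> (nat \<Rightarrow> 'e)" where
  "gseq w d = lapp w (lapp (replicate d cc) bs)"

lemma gseq_gen: "w \<noteq> [] \<Longrightarrow> gen (gseq w d)"
  unfolding gseq_def lapp_assoc by (rule gen_lapp) simp

lemma gseq_Omega: "valid_word RS w \<Longrightarrow> gseq w d \<in> Omega RS"
  unfolding gseq_def by (rule lapp_Omega) (auto simp: lapp_def bs_in cc)

lemma gseq_hasp: "w \<noteq> [] \<Longrightarrow> hasp (gseq w d) w"
  unfolding gseq_def by (rule hasp_lapp)

definition pick :: "'v \<Rightarrow> 'e" where "pick r = (SOME z. z \<in> arcs RR \<and> (tail RR z = r \<or> head RR z = r))"

lemma pick: "r \<in> verts RR \<Longrightarrow> pick r \<in> arcs RR \<and> (tail RR (pick r) = r \<or> head RR (pick r) = r)"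
proof -
  assume "r \<in> verts RR"
  then obtain z where z: "z \<in> arcs RR" "r = tail RR z \<or> r = head RR z"
    using noisoR unfolding no_isolated_def by blast
  then have "z \<in> arcs RR \<and> (tail RR z = r \<or> head RR z = r)" by auto
  then show ?thesis unfolding pick_def by (rule someI)
qed

primrec sd :: "'v \<Rightarrow> nat \<Rightarrow> 'v" where
  "sd r 0 = r"
| "sd r (Suc k) = (if tail RR (pick (sd r k)) = sd r k then ii else tt)"

definition hs :: "'v \<Rightarrow> nat \<Rightarrow> 'e" where "hs r k = pick (sd r k)"

definition Er :: "'v \<Rightarrow> 'e list \<Rightarrow> 'e list \<times> 'v" where "Er r x = (if r = ii then T x else Hd x)"

lemma sd_in: "r \<in> {ii, tt} \<Longrightarrow> sd r k \<in> {ii, tt}" by (induction k) auto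

lemma hs_in: "r \<in> {ii, tt} \<Longrightarrow> hs r k \<in> arcs RR"
  using sd_in[of r k] pick ii_in tt_in unfolding hs_def by auto

lemma Er_EN: "Er r x \<in> EN x" by (simp add: Er_def EN_def)

lemma vm_Er2: "r \<in> {ii, tt} \<Longrightarrow> vm x r = Er r x" using ii_ne_tt by (auto simp: vm_def Er_def)

lemma hug_step: assumes r: "r \<in> {ii, tt}" and x: "x \<noteq> []"
  shows "Er (if tail RR (pick r) = r then ii else tt) (x @ [pick r]) = Er r x \<and>
         (\<forall>v\<in>EN (x @ [pick r]). v = Er r x \<or> fst v = x)"
proof -
  define z where "z = pick r"
  have z: "z \<in> arcs RR" "tail RR z = r \<or> head RR z = r" using pick[of r] r ii_in tt_in by (auto simp: z_def)
  have na: "{tail RR z, head RR z} \<noteq> {ii, tt}" using nonadj[OF z(1)] .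
  show ?thesis
  proof (cases "tail RR z = r")
    case True
    have h: "head RR z = r \<or> (head RR z \<noteq> ii \<and> head RR z \<noteq> tt)" using na True r by auto
    have "vm x (head RR z) = Er r x \<or> fst (vm x (head RR z)) = x"
      using h vm_Er2[OF r] by (auto simp: vm_def)
    then show ?thesis using True r vm_Er2[OF r]
      by (simp add: z_def[symmetric] EN_snoc[OF x] Er_def T_snoc[OF x] Hd_snoc[OF x] vm_Er)
  next
    case False
    then have hh: "head RR z = r" using z by auto
    have t: "tail RR z \<noteq> ii \<and> tail RR z \<noteq> tt" using na False hh r by auto
    then have "fst (vm x (tail RR z)) = x" by (simp add: vm_def)
    then show ?thesis using False hh r vm_Er2[OF r] ii_ne_tt
      by (auto simp: z_def[symmetric] EN_snoc[OF x] Er_def T_snoc[OF x] Hd_snoc[OF x] vm_Er)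
  qed
qed

lemma hug_H1: assumes r: "r \<in> {ii, tt}" and x: "x \<noteq> []"
  shows "Er (sd r k) (x @ map (hs r) [0..<k]) = Er r x"
proof (induction k)
  case 0 then show ?case by simp
next
  case (Suc k)
  have ne: "x @ map (hs r) [0..<k] \<noteq> []" using x by simp
  have e1: "x @ map (hs r) [0..<Suc k] = (x @ map (hs r) [0..<k]) @ [pick (sd r k)]" by (simp add: hs_def)
  have e2: "sd r (Suc k) = (if tail RR (pick (sd r k)) = sd r k then ii else tt)" by simp
  have A: "Er (if tail RR (pick (sd r k)) = sd r k then ii else tt) ((x @ map (hs r) [0..<k]) @ [pick (sd r k)])
     = Er (sd r k) (x @ map (hs r) [0..<k])"
    using hug_step[OF sd_in[OF r, of k] ne] by blast
  show ?case by (simp only: e1 e2 A Suc.IH)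
qed

lemma hug_H2: assumes r: "r \<in> {ii, tt}" and x: "x \<noteq> []"
  shows "\<forall>v\<in>EN (x @ map (hs r) [0..<Suc k]). v = Er r x \<or> fst v = x @ map (hs r) [0..<k]"
proof -
  have ne: "x @ map (hs r) [0..<k] \<noteq> []" using x by simp
  have e1: "x @ map (hs r) [0..<Suc k] = (x @ map (hs r) [0..<k]) @ [pick (sd r k)]" by (simp add: hs_def)
  have A: "\<forall>v\<in>EN ((x @ map (hs r) [0..<k]) @ [pick (sd r k)]). v = Er (sd r k) (x @ map (hs r) [0..<k])
      \<or> fst v = x @ map (hs r) [0..<k]"
    using hug_step[OF sd_in[OF r, of k] ne] by blast
  show ?thesis unfolding e1 using A hug_H1[OF r x, of k] by metis
qed

lemma hug_Omega: "valid_word RS x \<Longrightarrow> r \<in> {ii, tt} \<Longrightarrow> lapp x (hs r) \<in> Omega RS"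
  by (rule lapp_Omega) (auto simp: hs_in)

lemma hug_sep: assumes x: "x \<noteq> []" and y: "y \<noteq> []" and r: "r \<in> {ii, tt}" and s: "s \<in> {ii, tt}"
  and rel: "(lapp x (hs r), lapp y (hs s)) \<in> omrel RS"
  shows "Er r x = Er s y"
proof (rule ccontr)
  assume ab: "Er r x \<noteq> Er s y"
  define n where "n = max (length x) (length y)"
  define kx where "kx = Suc n - length x"
  define ky where "ky = Suc n - length y"
  have lxn: "length x \<le> n" "length y \<le> n" by (simp_all add: n_def)
  have l1: "length x \<ge> 1" "length y \<ge> 1" using x y by (simp_all add: Suc_le_eq)
  have kx: "length x - 1 + kx = n" "kx \<ge> 1" unfolding kx_def using lxn l1 by arith+
  have ky: "length y - 1 + ky = n" "ky \<ge> 1" unfolding ky_def using lxn l1 by arith+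
  have la: "length (fst (Er r x)) < length x" using EN_label_len[OF x Er_EN] .
  have lb: "length (fst (Er s y)) < length y" using EN_label_len[OF y Er_EN] .
  define X where "X = x @ map (hs r) [0..<kx]"
  define Y where "Y = y @ map (hs s) [0..<ky]"
  have lX: "length X = Suc n" using kx(1) l1(1) unfolding X_def by simp
  have lY: "length Y = Suc n" using ky(1) l1(2) unfolding Y_def by simp
  have P1: "pref (lapp x (hs r)) (Suc n) = x @ map (hs r) [0..<Suc kx]"
    using pref_lapp[OF x, of "hs r" "Suc kx"] kx by simp
  have P2: "pref (lapp y (hs s)) (Suc n) = y @ map (hs s) [0..<Suc ky]"
    using pref_lapp[OF y, of "hs s" "Suc ky"] ky by simp
  obtain v where v: "v \<in> EN (x @ map (hs r) [0..<Suc kx])" "v \<in> EN (y @ map (hs s) [0..<Suc ky])"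
    using rel omrel_iff P1 P2 by (metis disjoint_iff)
  have v1: "v = Er r x \<or> fst v = X" using hug_H2[OF r x] v(1) X_def by blast
  have v2: "v = Er s y \<or> fst v = Y" using hug_H2[OF s y] v(2) Y_def by blast
  have nX: "v \<noteq> Er r x"
  proof
    assume h: "v = Er r x"
    from v2 show False
    proof
      assume "v = Er s y" then show False using h ab by simp
    next
      assume "fst v = Y" then have "length (fst v) = Suc n" using lY by simp
      then show False using h la lxn by simp
    qed
  qed
  have nY: "v \<noteq> Er s y"
  proof
    assume h: "v = Er s y"
    from v1 show False
    proof
      assume "v = Er r x" then show False using h ab by simp
    next
      assume "fst v = X" then have "length (fst v) = Suc n" using lX by simp
      then show False using h lb lxn by simp
    qed
  qed
  have "X = Y" using v1 v2 nX nY by simp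
  have aX: "Er r x \<in> EN X" using hug_H1[OF r x, of kx] Er_EN X_def by metis
  have bX: "Er s y \<in> EN X" using hug_H1[OF s y, of ky] Er_EN Y_def \<open>X = Y\<close> by metis
  obtain kx' where kx': "kx = Suc kx'" using kx(2) by (cases kx) auto
  have "Er s y = Er r x \<or> fst (Er s y) = x @ map (hs r) [0..<kx']"
    using hug_H2[OF r x, of kx'] bX unfolding X_def kx' by blast
  moreover have "length (x @ map (hs r) [0..<kx']) = n" using kx kx' l1(1) by simp
  ultimately show False using ab lb lxn by auto
qed

lemma hug_EN: assumes x: "valid_word RS x" and r: "r \<in> {ii, tt}" and n: "length (fst (Er r x)) \<le> n"
  shows "Er r x \<in> EN (pref (lapp x (hs r)) n)"
proof -
  have x0: "x \<noteq> []" using x by (simp add: valid_word_def)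
  show ?thesis
  proof (cases "n < length x - 1")
    case True
    then have e: "pref (lapp x (hs r)) n = take (Suc n) x" using pref_lapp_short[of n x "hs r"] by simp
    have "x = take (Suc n) x @ drop (Suc n) x" by simp
    then have "Er r x \<in> EN (take (Suc n) x @ drop (Suc n) x)" using Er_EN by metis
    moreover have "take (Suc n) x \<noteq> []" using x0 by simp
    moreover have "length (fst (Er r x)) < length (take (Suc n) x)" using n True by simp
    ultimately show ?thesis using EN_down e by metis
  next
    case False
    define k where "k = n - (length x - 1)"
    have "pref (lapp x (hs r)) n = x @ map (hs r) [0..<k]"
      using pref_lapp[OF x0, of "hs r" k] False k_def by simp
    then show ?thesis using hug_H1[OF r x0, of k] Er_EN by metis
  qed
qed

lemma hug_rel: assumes x: "valid_word RS x" and y: "valid_word RS y" and r: "r \<in> {ii, tt}" and s: "s \<in> {ii, tt}"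
  and e: "Er r x = Er s y"
  shows "(lapp x (hs r), lapp y (hs s)) \<in> omrel RS"
proof -
  have x0: "x \<noteq> []" and y0: "y \<noteq> []" using x y by (auto simp: valid_word_def)
  define a where "a = Er r x"
  have lx: "strict_prefix (fst a) x" using EN_label[OF x0 Er_EN] a_def by simp
  have ly: "strict_prefix (fst a) y" using EN_label[OF y0 Er_EN] a_def e by simp
  have "EN (pref (lapp x (hs r)) n) \<inter> EN (pref (lapp y (hs s)) n) \<noteq> {}" for n
  proof (cases "n < length (fst a)")
    case True
    have "pref (lapp x (hs r)) n = pref (lapp y (hs s)) n"
    proof (rule nth_equalityI)
      show "length (pref (lapp x (hs r)) n) = length (pref (lapp y (hs s)) n)" by simp
      fix i assume "i < length (pref (lapp x (hs r)) n)"
      then have i: "i \<le> n" by simp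
      have ix: "i < length x" "i < length y" using i True prefix_length_less[OF lx] prefix_length_less[OF ly] by auto
      have "x ! i = fst a ! i" "y ! i = fst a ! i" using lx ly i True
        by (auto simp: strict_prefix_def prefix_def nth_append)
      then show "pref (lapp x (hs r)) n ! i = pref (lapp y (hs s)) n ! i"
        using i ix by (simp add: nth_pref lapp_def)
    qed
    then show ?thesis by (simp add: EN_def)
  next
    case False
    then have "a \<in> EN (pref (lapp x (hs r)) n)" "a \<in> EN (pref (lapp y (hs s)) n)"
      using hug_EN[OF x r, of n] hug_EN[OF y s, of n] a_def e by auto
    then show ?thesis by blast
  qed
  then show ?thesis using omrel_iff hug_Omega[OF x r] hug_Omega[OF y s] by blast
qed

end


lemma reprefix_reprefix: "reprefix u v (reprefix w u \<omega>) = reprefix w v \<omega>"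
  unfolding reprefix_def by (auto simp: fun_eq_iff)

lemma reprefix_self: "hasp \<omega> u \<Longrightarrow> reprefix u u \<omega> = \<omega>"
  unfolding reprefix_def hasp_def by (auto simp: fun_eq_iff)

lemma hasp_reprefix: "u \<noteq> [] \<Longrightarrow> hasp (reprefix w u \<omega>) u"
  unfolding reprefix_def hasp_def by auto

lemma reprefix_app: "hasp \<omega> (w @ r) \<Longrightarrow> reprefix w u \<omega> = reprefix (w @ r) (u @ r) \<omega>"
proof -
  assume h: "hasp \<omega> (w @ r)"
  show ?thesis unfolding reprefix_def
  proof
    fix i
    show "(if i < length u then u ! i else \<omega> (i - length u + length w)) =
          (if i < length (u @ r) then (u @ r) ! i else \<omega> (i - length (u @ r) + length (w @ r)))"
    proof (cases "i < length u")
      case True then show ?thesis by (simp add: nth_append)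
    next
      case False
      then obtain k where k: "i = length u + k" by (metis le_Suc_ex not_less)
      show ?thesis
      proof (cases "k < length r")
        case True
        then have "\<omega> (k + length w) = (w @ r) ! (k + length w)"
          using h unfolding hasp_def by simp
        then show ?thesis using True k by (simp add: nth_append)
      next
        case F2: False
        then show ?thesis using k by simp
      qed
    qed
  qed
qed

context XP begin

definition can where
  "can f w u \<longleftrightarrow> valid_word RS w \<and> valid_word RS u \<and> canonical_on RS f w u"

lemma is_loop_T: "is_loop RS w \<longleftrightarrow> T w = Hd w" by (simp add: is_loop_def T_def Hd_def)

lemma canI:
  assumes "valid_word RS w" "valid_word RS u" "T w = Hd w \<longleftrightarrow> T u = Hd u"
    "\<And>\<omega>. \<omega> \<in> Omega RS \<Longrightarrow> hasp \<omega> w \<Longrightarrow> f (cls RS \<omega>) = cls RS (reprefix w u \<omega>)"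
  shows "can f w u"
proof -
  have w0: "w \<noteq> []" using assms(1) by (simp add: valid_word_def)
  show ?thesis unfolding can_def canonical_on_def is_loop_T using assms pref_eq_hasp[OF w0] by blast
qed

lemma canD:
  assumes "can f w u"
  shows "valid_word RS w" "valid_word RS u" "T w = Hd w \<longleftrightarrow> T u = Hd u"
    "\<And>\<omega>. \<omega> \<in> Omega RS \<Longrightarrow> hasp \<omega> w \<Longrightarrow> f (cls RS \<omega>) = cls RS (reprefix w u \<omega>)"
proof -
  show w: "valid_word RS w" "valid_word RS u" using assms by (auto simp: can_def)
  have w0: "w \<noteq> []" using w(1) by (simp add: valid_word_def)
  show "T w = Hd w \<longleftrightarrow> T u = Hd u" using assms by (simp add: can_def canonical_on_def is_loop_T)
  show "\<And>\<omega>. \<omega> \<in> Omega RS \<Longrightarrow> hasp \<omega> w \<Longrightarrow> f (cls RS \<omega>) = cls RS (reprefix w u \<omega>)"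
    using assms pref_eq_hasp[OF w0] unfolding can_def canonical_on_def by blast
qed

lemma valid_app: "valid_word RS w \<Longrightarrow> valid_word RS (w @ r) \<Longrightarrow> valid_word RS u \<Longrightarrow> valid_word RS (u @ r)"
  unfolding valid_word_def by auto

lemma valid_append_R: "valid_word RS (w @ r) \<Longrightarrow> w \<noteq> [] \<Longrightarrow> set r \<subseteq> arcs RR"
  unfolding valid_word_def by auto

lemma loop_app: assumes "valid_word RS (w @ r)" "valid_word RS (u @ r)" "w \<noteq> []" "u \<noteq> []"
   "T w = Hd w \<longleftrightarrow> T u = Hd u"
  shows "T (w @ r) = Hd (w @ r) \<longleftrightarrow> T (u @ r) = Hd (u @ r)"
proof (cases r rule: rev_cases)
  case Nil then show ?thesis using assms by simp
next
  case (snoc r' z)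
  have z: "z \<in> arcs RR" using valid_append_R[OF assms(1,3)] snoc by auto
  have "w @ r' \<noteq> []" "u @ r' \<noteq> []" using assms by auto
  then show ?thesis using loop_snoc[OF _ z] snoc by (metis append_assoc)
qed

lemma reprefix_Omega: "\<omega> \<in> Omega RS \<Longrightarrow> hasp \<omega> w \<Longrightarrow> valid_word RS u \<Longrightarrow> reprefix w u \<omega> \<in> Omega RS"
proof -
  assume a: "\<omega> \<in> Omega RS" "hasp \<omega> w" "valid_word RS u"
  have "reprefix w u \<omega> = lapp u (\<lambda>i. \<omega> (i + length w))" by (rule reprefix_eq)
  moreover have "\<omega> (i + length w) \<in> arcs RR" for i
  proof -
    have "length w \<ge> 1" using a(2) by (cases w) (auto simp: hasp_def)
    then have e: "i + length w = Suc (i + length w - 1)" by simp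
    have "\<omega> (Suc (i + length w - 1)) \<in> arcs RR" using a(1) by (simp add: Omega_def)
    then show ?thesis using e by metis
  qed
  ultimately show ?thesis using lapp_Omega[OF a(3)] by simp
qed

lemma can_ext: assumes c: "can f w u" and v: "valid_word RS (w @ r)" shows "can f (w @ r) (u @ r)"
proof (rule canI)
  show "valid_word RS (w @ r)" by fact
  have w: "valid_word RS w" "valid_word RS u" using canD[OF c] by auto
  show vu: "valid_word RS (u @ r)" using valid_app[OF w(1) v w(2)] .
  have w0: "w \<noteq> []" "u \<noteq> []" using w by (auto simp: valid_word_def)
  show "T (w @ r) = Hd (w @ r) \<longleftrightarrow> T (u @ r) = Hd (u @ r)"
    using loop_app[OF v vu w0 canD(3)[OF c]] .
  fix \<omega> assume o: "\<omega> \<in> Omega RS" "hasp \<omega> (w @ r)"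
  have "hasp \<omega> w" using hasp_mono[OF o(2) _ w0(1)] by simp
  then show "f (cls RS \<omega>) = cls RS (reprefix (w @ r) (u @ r) \<omega>)"
    using canD(4)[OF c o(1)] reprefix_app[OF o(2)] by simp
qed

lemma can_comp: assumes g: "can g w u" and f: "can f u v" and h: "\<And>p. p \<in> Xsp RS \<Longrightarrow> hh p = f (g p)"
  shows "can hh w v"
proof (rule canI)
  show "valid_word RS w" "valid_word RS v" using canD(1)[OF g] canD(2)[OF f] .
  show "T w = Hd w \<longleftrightarrow> T v = Hd v" using canD(3)[OF g] canD(3)[OF f] by simp
  fix \<omega> assume o: "\<omega> \<in> Omega RS" "hasp \<omega> w"
  have u: "valid_word RS u" using canD(2)[OF g] .
  have u0: "u \<noteq> []" using u by (simp add: valid_word_def)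
  have o1: "reprefix w u \<omega> \<in> Omega RS" using reprefix_Omega[OF o u] .
  have "hh (cls RS \<omega>) = f (g (cls RS \<omega>))" using h cls_Xsp[OF o(1)] by simp
  also have "\<dots> = f (cls RS (reprefix w u \<omega>))" using canD(4)[OF g o] by simp
  also have "\<dots> = cls RS (reprefix u v (reprefix w u \<omega>))" using canD(4)[OF f o1 hasp_reprefix[OF u0]] .
  finally show "hh (cls RS \<omega>) = cls RS (reprefix w v \<omega>)" by (simp add: reprefix_reprefix)
qed

lemma can_inv: assumes f: "can f w u" and g: "\<And>p. p \<in> Xsp RS \<Longrightarrow> g (f p) = p"
  shows "can g u w"
proof (rule canI)
  show "valid_word RS u" "valid_word RS w" using canD(1,2)[OF f] by auto
  show "T u = Hd u \<longleftrightarrow> T w = Hd w" using canD(3)[OF f] by simp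
  fix \<omega>' assume o: "\<omega>' \<in> Omega RS" "hasp \<omega>' u"
  have w0: "w \<noteq> []" using canD(1)[OF f] by (simp add: valid_word_def)
  define \<omega> where "\<omega> = reprefix u w \<omega>'"
  have oo: "\<omega> \<in> Omega RS" "hasp \<omega> w" using reprefix_Omega[OF o canD(1)[OF f]] hasp_reprefix[OF w0] \<omega>_def by auto
  have e: "reprefix w u \<omega> = \<omega>'" unfolding \<omega>_def reprefix_reprefix using reprefix_self[OF o(2)] .
  have "g (cls RS \<omega>') = g (f (cls RS \<omega>))" using canD(4)[OF f oo] e by simp
  also have "\<dots> = cls RS \<omega>" using g cls_Xsp[OF oo(1)] by simp
  finally show "g (cls RS \<omega>') = cls RS (reprefix u w \<omega>')" unfolding \<omega>_def .
qed

lemma can_id: assumes "valid_word RS w" "\<And>p. p \<in> Xsp RS \<Longrightarrow> g p = p" shows "can g w w"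
proof (rule canI)
  show "valid_word RS w" "valid_word RS w" by fact+
  show "T w = Hd w \<longleftrightarrow> T w = Hd w" ..
  fix \<omega> assume o: "\<omega> \<in> Omega RS" "hasp \<omega> w"
  show "g (cls RS \<omega>) = cls RS (reprefix w w \<omega>)" using assms(2) cls_Xsp[OF o(1)] reprefix_self[OF o(2)] by simp
qed

lemma gseq_reprefix: "length w = length w' \<Longrightarrow> reprefix w u (gseq w' d) = gseq u d"
  unfolding gseq_def by (rule reprefix_lapp)

lemma gseq_neq: assumes "length u < length u'" shows "gseq u (length u' - length u) \<noteq> gseq u' (length u' - length u)"
proof
  define d where "d = length u' - length u"
  assume e: "gseq u (length u' - length u) = gseq u' (length u' - length u)"
  have d1: "d \<ge> 1" using assms d_def by simp
  have "gseq u d (length u') = fst zz"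
    unfolding gseq_def lapp_def using assms d_def by (simp add: bs_def)
  moreover have "gseq u' d (length u') = cc"
    unfolding gseq_def lapp_def using d1 by simp
  ultimately show False using e d_def cc(2) by simp
qed

lemma can_uniq: assumes f1: "can f w u" and f2: "can f w u'" shows "u = u'"
proof -
  have w0: "w \<noteq> []" using canD(1)[OF f1] by (simp add: valid_word_def)
  have u0: "u \<noteq> []" "u' \<noteq> []" using canD(2)[OF f1] canD(2)[OF f2] by (auto simp: valid_word_def)
  have eq: "gseq u d = gseq u' d" for d
  proof -
    have o: "gseq w d \<in> Omega RS" "hasp (gseq w d) w" using gseq_Omega[OF canD(1)[OF f1]] gseq_hasp[OF w0] by auto
    have "cls RS (gseq u d) = cls RS (gseq u' d)"
      using canD(4)[OF f1 o] canD(4)[OF f2 o] gseq_reprefix[of w w] by simp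
    then have "(gseq u d, gseq u' d) \<in> omrel RS" using cls_eqD gseq_Omega[OF canD(2)[OF f2]] by blast
    then have "gseq u' d = gseq u d" by (rule gen_single[OF gseq_gen[OF u0(1)]])
    then show ?thesis by simp
  qed
  show ?thesis
  proof (cases "length u = length u'")
    case True
    show ?thesis
    proof (rule nth_equalityI)
      show "length u = length u'" by fact
      fix i assume "i < length u"
      then show "u ! i = u' ! i" using fun_cong[OF eq[of 0], of i] True by (simp add: gseq_def lapp_def)
    qed
  next
    case False
    then show ?thesis
      using gseq_neq[of u u'] gseq_neq[of u' u] eq by (metis linorder_neqE_nat)
  qed
qed

lemma can_uniq': assumes c: "can f w u" shows "(THE u. can f w u) = u"
proof (rule the_equality)
  show "can f w u" by (rule c)
  fix x assume "can f w x" then show "x = u" using can_uniq[OF _ c] by blast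
qed

lemma can_dom: assumes "rearrangement RS f"
  shows "\<exists>N. \<forall>y. valid_word RS y \<and> N \<le> length y \<longrightarrow> (\<exists>u. can f y u)"
proof -
  obtain S where S: "finite S" "\<forall>w\<in>S. valid_word RS w" "\<Union>(cell RS ` S) = Xsp RS"
    "\<forall>w\<in>S. \<exists>w'. valid_word RS w' \<and> canonical_on RS f w w'"
    using assms unfolding rearrangement_def by (elim conjE exE) blast
  define N where "N = (\<Sum>w\<in>S. length w)"
  have "\<exists>u. can f y u" if y: "valid_word RS y" "N \<le> length y" for y
  proof -
    have y0: "y \<noteq> []" using y by (simp add: valid_word_def)
    define \<omega> where "\<omega> = gseq y 0"
    have o: "\<omega> \<in> Omega RS" "hasp \<omega> y" using gseq_Omega[OF y(1)] gseq_hasp[OF y0] \<omega>_def by auto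
    have "cls RS \<omega> \<in> Xsp RS" using cls_Xsp[OF o(1)] .
    then have "cls RS \<omega> \<in> \<Union>(cell RS ` S)" using S(3) by simp
    then obtain w where w: "w \<in> S" "cls RS \<omega> \<in> cell RS w" by (rule UN_E)
    then obtain \<omega>' where \<omega>': "\<omega>' \<in> Omega RS" "pref \<omega>' (length w - 1) = w" "cls RS \<omega> = cls RS \<omega>'"
      unfolding cell_def by auto
    have rel: "(\<omega>, \<omega>') \<in> omrel RS" using cls_eqD[OF \<omega>'(1,3)] .
    have "gen \<omega>" using gseq_gen[OF y0] \<omega>_def by simp
    then have "\<omega>' = \<omega>" using gen_single rel by blast
    have wv: "valid_word RS w" using S(2) w(1) by blast
    then have w0: "w \<noteq> []" by (simp add: valid_word_def)
    have hw: "hasp \<omega> w" using \<omega>'(2) \<open>\<omega>' = \<omega>\<close> pref_eq_hasp[OF w0] by simp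
    have "length w \<le> N" unfolding N_def by (rule member_le_sum[OF w(1) _ S(1)]) simp
    have "prefix w y"
    proof (cases "prefix w y")
      case False
      then have py: "prefix y w" using hasp_prefix[OF hw o(2)] by blast
      then have "length y \<le> length w" by (rule prefix_length_le)
      then have "length y = length w" using \<open>length w \<le> N\<close> y(2) by simp
      then have "y = w" using prefix_eq_len[OF py] by simp
      then show ?thesis by simp
    qed simp
    then obtain r where r: "y = w @ r" by (auto simp: prefix_def)
    obtain w' where w': "valid_word RS w'" "canonical_on RS f w w'" using S(4) w(1) by blast
    have "can f w w'" using wv w' by (simp add: can_def)
    then have "can f y (w' @ r)" using can_ext y(1) r by simp
    then show ?thesis by blast
  qed
  then show ?thesis by blast
qed

lemma VR: assumes fx: "can f x u" and fy: "can f y u'" and r: "r \<in> {ii, tt}" and s: "s \<in> {ii, tt}"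
  and e: "Er r x = Er s y"
  shows "Er r u = Er s u'"
proof -
  have x: "valid_word RS x" "valid_word RS u" using canD[OF fx] by auto
  have y: "valid_word RS y" "valid_word RS u'" using canD[OF fy] by auto
  have x0: "x \<noteq> []" "u \<noteq> []" "y \<noteq> []" "u' \<noteq> []" using x y by (auto simp: valid_word_def)
  have "cls RS (lapp x (hs r)) = cls RS (lapp y (hs s))" using cls_eq[OF hug_rel[OF x(1) y(1) r s e]] .
  moreover have "f (cls RS (lapp x (hs r))) = cls RS (lapp u (hs r))"
    using canD(4)[OF fx hug_Omega[OF x(1) r] hasp_lapp[OF x0(1)]] reprefix_lapp[of x x] by simp
  moreover have "f (cls RS (lapp y (hs s))) = cls RS (lapp u' (hs s))"
    using canD(4)[OF fy hug_Omega[OF y(1) s] hasp_lapp[OF x0(3)]] reprefix_lapp[of y y] by simp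
  ultimately have "cls RS (lapp u (hs r)) = cls RS (lapp u' (hs s))" by simp
  then have "(lapp u (hs r), lapp u' (hs s)) \<in> omrel RS" using cls_eqD hug_Omega[OF y(2) s] by blast
  then show ?thesis using hug_sep[OF x0(2) x0(4) r s] by blast
qed

end


context XP begin

definition cut where
  "cut C \<longleftrightarrow> finite C \<and> (\<forall>w\<in>C. valid_word RS w) \<and> (\<forall>\<omega>\<in>Omega RS. \<exists>w\<in>C. hasp \<omega> w) \<and>
     (\<forall>w\<in>C. \<forall>w'\<in>C. prefix w w' \<longrightarrow> w = w')"

definition good where
  "good E C \<longleftrightarrow> E \<in> expansions RS \<and> arcs E = C \<and> (\<forall>x\<in>C. tail E x = T x \<and> head E x = Hd x) \<and>
     verts E = T ` C \<union> Hd ` C"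

lemma valid_snoc: "valid_word RS p \<Longrightarrow> z \<in> arcs RR \<Longrightarrow> valid_word RS (p @ [z])"
  unfolding valid_word_def by (cases p) auto

lemma valid_butlast: "valid_word RS w \<Longrightarrow> length w \<ge> 2 \<Longrightarrow> valid_word RS (butlast w) \<and> last w \<in> arcs RR"
proof -
  assume v: "valid_word RS w" "length w \<ge> 2"
  obtain a ys where w0: "w = a # ys" using v by (cases w) (auto simp: valid_word_def)
  then have w: "w = a # ys" "ys \<noteq> []" using v(2) by auto
  have "set ys \<subseteq> arcs RR" "a \<in> arcs B0" using v w by (auto simp: valid_word_def)
  moreover have "set (butlast ys) \<subseteq> set ys" by (rule in_set_butlastD[THEN subsetI])
  ultimately show ?thesis using w by (auto simp: valid_word_def)
qed

lemma good_base: assumes c: "cut C" and l1: "\<forall>w\<in>C. length w = 1" shows "good (lift0 RS) C"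
proof -
  have CC: "C = (\<lambda>a. [a]) ` arcs B0"
  proof
    show "C \<subseteq> (\<lambda>a. [a]) ` arcs B0"
    proof
      fix w assume w: "w \<in> C"
      then have "valid_word RS w" "length w = 1" using c l1 by (auto simp: cut_def)
      then show "w \<in> (\<lambda>a. [a]) ` arcs B0" by (cases w) (auto simp: valid_word_def)
    qed
    show "(\<lambda>a. [a]) ` arcs B0 \<subseteq> C"
    proof
      fix x assume "x \<in> (\<lambda>a. [a]) ` arcs B0"
      then obtain a where a: "a \<in> arcs B0" "x = [a]" by auto
      have v: "valid_word RS [a]" using a by (simp add: valid_word_def)
      obtain w where w: "w \<in> C" "hasp (gseq [a] 0) w" using c gseq_Omega[OF v] unfolding cut_def by blast
      have "length w = 1" using l1 w by simp
      then have "w = [a]" using w(2) hasp_prefix[OF w(2) gseq_hasp[of "[a]" 0]]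
        by (cases w) (auto simp: prefix_def)
      then show "x \<in> C" using w a by simp
    qed
  qed
  have vb: "verts B0 = tail B0 ` arcs B0 \<union> head B0 ` arcs B0"
    using noisoB wfB unfolding no_isolated_def wf_graph_def by auto
  show ?thesis unfolding good_def
  proof (intro conjI ballI)
    show "lift0 RS \<in> expansions RS" by (rule expansions.base_exp)
    show "arcs (lift0 RS) = C" using CC by (simp add: lift0_def)
    fix x assume "x \<in> C"
    then obtain a where "x = [a]" using CC by auto
    then show "tail (lift0 RS) x = T x" "head (lift0 RS) x = Hd x"
      by (simp_all add: lift0_def T_single Hd_single)
  next
    show "verts (lift0 RS) = T ` C \<union> Hd ` C"
      unfolding CC by (auto simp: lift0_def T_single Hd_single vb image_iff)
  qed
qed

lemma sum_len_lt: assumes "finite C" "S \<subseteq> C" "card S \<ge> 2" "\<forall>s\<in>S. length s = Suc L" "p \<notin> C - S" "length p = L"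
  shows "(\<Sum>w\<in>(C - S) \<union> {p}. length w) < (\<Sum>w\<in>C. length w)"
proof -
  have fS: "finite S" using assms(1,2) finite_subset by blast
  have s1: "(\<Sum>w\<in>(C - S) \<union> {p}. length w) = (\<Sum>w\<in>C - S. length w) + length p"
    using assms(1,5) by (simp add: sum.insert_if)
  have s2: "(\<Sum>w\<in>C. length w) = (\<Sum>w\<in>C - S. length w) + (\<Sum>w\<in>S. length w)"
    using assms(1,2) by (simp add: sum.subset_diff)
  have s3: "(\<Sum>w\<in>S. length w) = card S * Suc L" using assms(4) by simp
  have s4: "card S * Suc L \<ge> 2 * Suc L" using assms(3) by (rule mult_le_mono1)
  have s5: "L < (\<Sum>w\<in>S. length w)" using s3 s4 by simp
  show ?thesis using s1 s2 s5 assms(6) by linarith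
qed

lemma cut_good: "cut C \<Longrightarrow> \<exists>E. good E C"
proof (induction "\<Sum>w\<in>C. length w" arbitrary: C rule: less_induct)
  case less
  have fin: "finite C" and val: "\<And>w. w \<in> C \<Longrightarrow> valid_word RS w"
    and cov: "\<And>\<omega>. \<omega> \<in> Omega RS \<Longrightarrow> \<exists>w\<in>C. hasp \<omega> w"
    and inc: "\<And>w w'. w \<in> C \<Longrightarrow> w' \<in> C \<Longrightarrow> prefix w w' \<Longrightarrow> w = w'"
    using less.prems unfolding cut_def by blast+
  show ?case
  proof (cases "\<forall>w\<in>C. length w = 1")
    case True then show ?thesis using good_base[OF less.prems] by blast
  next
    case False
    then obtain w0 where w0: "w0 \<in> C" "length w0 \<noteq> 1" by blast
    have "w0 \<noteq> []" using val[OF w0(1)] by (simp add: valid_word_def)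
    then have w02: "length w0 \<ge> 2" using w0(2) by (cases w0) (auto simp: Suc_le_eq)
    define L where "L = Max (length ` C)"
    have Lmax: "\<And>c. c \<in> C \<Longrightarrow> length c \<le> L" unfolding L_def using fin by simp
    have "L \<in> length ` C" unfolding L_def using fin w0(1) by (intro Max_in) auto
    then obtain w where w: "w \<in> C" "length w = L" by auto
    have L2: "L \<ge> 2" using Lmax[OF w0(1)] w02 by simp
    have vw: "valid_word RS w" using val[OF w(1)] .
    define p where "p = butlast w"
    have pv: "valid_word RS p" and lw: "last w \<in> arcs RR" using valid_butlast[OF vw] w L2 p_def by auto
    have p0: "p \<noteq> []" using pv by (simp add: valid_word_def)
    have wp: "w = p @ [last w]" using vw p_def by (simp add: valid_word_def)
    have lp: "Suc (length p) = L" using w wp by (metis length_append_singleton)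
    define S where "S = (\<lambda>z. p @ [z]) ` arcs RR"
    have SC: "S \<subseteq> C"
    proof
      fix s assume "s \<in> S"
      then obtain z where z: "z \<in> arcs RR" "s = p @ [z]" unfolding S_def by blast
      have vs: "valid_word RS s" using valid_snoc[OF pv z(1)] z(2) by simp
      have s0: "s \<noteq> []" using z by simp
      obtain c where c: "c \<in> C" "hasp (gseq s 0) c" using cov[OF gseq_Omega[OF vs]] by blast
      have ls: "length s = L" using z lp by simp
      from hasp_prefix[OF gseq_hasp[OF s0] c(2)] show "s \<in> C"
      proof
        assume sc: "prefix s c"
        then have "length s \<le> length c" by (rule prefix_length_le)
        then have "length s = length c" using Lmax[OF c(1)] ls by simp
        then show ?thesis using prefix_eq_len[OF sc] c(1) by simp
      next
        assume cs: "prefix c s"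
        show ?thesis
        proof (cases "c = s")
          case True then show ?thesis using c(1) by simp
        next
          case False
          then have "prefix c p" using cs z(2) by (simp add: prefix_snoc)
          then have "prefix c w" using wp by (metis prefix_prefix)
          then have "c = w" using inc[OF c(1) w(1)] by simp
          then have "length w \<le> length p" using \<open>prefix c p\<close> prefix_length_le by blast
          then show ?thesis using lp w(2) by simp
        qed
      qed
    qed
    have pC: "p \<notin> C"
    proof
      assume "p \<in> C"
      moreover have "prefix p w" using wp by (metis prefixI)
      ultimately have "p = w" using inc w(1) by blast
      then show False using wp by simp
    qed
    define C' where "C' = (C - S) \<union> {p}"
    have cut': "cut C'"
      unfolding cut_def
    proof (intro conjI ballI impI)
      show "finite C'" using fin by (simp add: C'_def)
    next
      fix x assume "x \<in> C'" then show "valid_word RS x" using val pv by (auto simp: C'_def)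
    next
      fix \<omega> assume o: "\<omega> \<in> Omega RS"
      obtain c where c: "c \<in> C" "hasp \<omega> c" using cov[OF o] by blast
      show "\<exists>w\<in>C'. hasp \<omega> w"
      proof (cases "c \<in> S")
        case True
        then obtain z where "c = p @ [z]" unfolding S_def by blast
        then have "hasp \<omega> p" using hasp_mono[OF c(2) _ p0] by (metis prefixI)
        then show ?thesis by (auto simp: C'_def)
      next
        case False then show ?thesis using c by (auto simp: C'_def)
      qed
    next
      fix a b assume ab: "a \<in> C'" "b \<in> C'" "prefix a b"
      show "a = b"
      proof (cases "a = p")
        case ap: True
        show ?thesis
        proof (rule ccontr)
          assume "a \<noteq> b"
          then have bC: "b \<in> C" "b \<notin> S" using ab ap by (auto simp: C'_def)
          obtain r where r: "b = p @ r" using ab(3) ap by (auto simp: prefix_def)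
          have "r \<noteq> []" using r bC pC by auto
          then obtain z r' where zr: "r = z # r'" by (cases r) auto
          have "set r \<subseteq> arcs RR" using valid_append_R[OF _ p0] val[OF bC(1)] r by simp
          then have z: "z \<in> arcs RR" using zr by simp
          have "p @ [z] \<in> C" using SC z unfolding S_def by blast
          moreover have "prefix (p @ [z]) b" using r zr by simp
          ultimately have "p @ [z] = b" using inc bC(1) by blast
          then show False using bC(2) z unfolding S_def by blast
        qed
      next
        case anp: False
        then have aC: "a \<in> C" "a \<notin> S" using ab(1) by (auto simp: C'_def)
        show ?thesis
        proof (cases "b = p")
          case True
          then have "prefix a w" using ab(3) wp by (metis prefix_prefix)
          then have "a = w" using inc aC(1) w(1) by blast
          then have "length w \<le> length p" using ab(3) True prefix_length_le by blast
          then show ?thesis using lp w(2) by simp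
        next
          case False
          then have "b \<in> C" using ab(2) by (auto simp: C'_def)
          then show ?thesis using inc aC(1) ab(3) by blast
        qed
      qed
    qed
    have cardS: "card S = card (arcs RR)" unfolding S_def by (rule card_image) (auto simp: inj_on_def)
    have "(\<Sum>w\<in>C'. length w) < (\<Sum>w\<in>C. length w)"
      unfolding C'_def using sum_len_lt[OF fin SC, of "length p" p] cardS card2 pC lp S_def by auto
    then obtain E' where E': "good E' C'" using less.hyps cut' by blast
    have E'1: "E' \<in> expansions RS" "arcs E' = C'" "\<And>x. x \<in> C' \<Longrightarrow> tail E' x = T x \<and> head E' x = Hd x"
      "verts E' = T ` C' \<union> Hd ` C'" using E' unfolding good_def by auto
    have pE: "p \<in> arcs E'" using E'1(2) by (simp add: C'_def)
    define E where "E = replace RS E' p"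
    have tp: "tail E' p = T p" "head E' p = Hd p" using E'1(3)[of p] by (auto simp: C'_def)
    have vmap_eq: "vmap RS E' p r = vm p r" for r using tp by (simp add: vmap_def vm_def)
    have arcsE: "arcs E = C" unfolding E_def replace_def using E'1(2) SC pC
      by (auto simp: C'_def S_def[symmetric])
    have tailE: "tail E x = T x \<and> head E x = Hd x" if x: "x \<in> C" for x
    proof (cases "x \<in> S")
      case True
      then obtain z where z: "z \<in> arcs RR" "x = p @ [z]" unfolding S_def by blast
      then show ?thesis unfolding E_def replace_def
        using True vmap_eq by (simp add: S_def[symmetric] T_snoc[OF p0] Hd_snoc[OF p0])
    next
      case False
      then have "x \<in> C'" using x by (simp add: C'_def)
      then show ?thesis unfolding E_def replace_def using False E'1(3) by (simp add: S_def[symmetric])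
    qed
    have vertsE: "verts E = T ` C \<union> Hd ` C"
    proof -
      have VE: "verts E = T ` C' \<union> Hd ` C' \<union> (\<lambda>u. (p, u)) ` (verts RR - {ii, tt})"
        unfolding E_def replace_def using E'1(4) by simp
      have a: "T s \<in> {T p, Hd p} \<union> (\<lambda>u. (p, u)) ` (verts RR - {ii, tt}) \<and>
               Hd s \<in> {T p, Hd p} \<union> (\<lambda>u. (p, u)) ` (verts RR - {ii, tt})" if "s \<in> S" for s
      proof -
        obtain z where z: "z \<in> arcs RR" "s = p @ [z]" using \<open>s \<in> S\<close> unfolding S_def by blast
        show ?thesis using tailR[OF z(1)] headR[OF z(1)] z(2)
          by (auto simp: T_snoc[OF p0] Hd_snoc[OF p0] vm_def)
      qed
      have b: "T p \<in> T ` S \<union> Hd ` S" "Hd p \<in> T ` S \<union> Hd ` S"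
      proof -
        have pi: "pick ii \<in> arcs RR" "tail RR (pick ii) = ii \<or> head RR (pick ii) = ii" using pick[OF ii_in] by auto
        have "T (p @ [pick ii]) = T p \<or> Hd (p @ [pick ii]) = T p"
          using pi(2) by (auto simp: T_snoc[OF p0] Hd_snoc[OF p0] vm_Er)
        moreover have "p @ [pick ii] \<in> S" using pi(1) unfolding S_def by blast
        ultimately show "T p \<in> T ` S \<union> Hd ` S" by (metis UnI1 UnI2 image_eqI)
        have pt: "pick tt \<in> arcs RR" "tail RR (pick tt) = tt \<or> head RR (pick tt) = tt" using pick[OF tt_in] by auto
        have "T (p @ [pick tt]) = Hd p \<or> Hd (p @ [pick tt]) = Hd p"
          using pt(2) by (auto simp: T_snoc[OF p0] Hd_snoc[OF p0] vm_Er)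
        moreover have "p @ [pick tt] \<in> S" using pt(1) unfolding S_def by blast
        ultimately show "Hd p \<in> T ` S \<union> Hd ` S" by (metis UnI1 UnI2 image_eqI)
      qed
      have d: "(p, u) \<in> T ` S \<union> Hd ` S" if u: "u \<in> verts RR" "u \<noteq> ii" "u \<noteq> tt" for u
      proof -
        have pu: "pick u \<in> arcs RR" "tail RR (pick u) = u \<or> head RR (pick u) = u" using pick[OF u(1)] by auto
        have "T (p @ [pick u]) = (p, u) \<or> Hd (p @ [pick u]) = (p, u)"
          using pu(2) u by (auto simp: T_snoc[OF p0] Hd_snoc[OF p0] vm_def)
        moreover have "p @ [pick u] \<in> S" using pu(1) unfolding S_def by blast
        ultimately show ?thesis by (metis UnI1 UnI2 image_eqI)
      qed
      have C'eq: "C' = (C - S) \<union> {p}" by (simp add: C'_def)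
      have Ceq: "C = (C - S) \<union> S" using SC by blast
      show ?thesis
      proof
        show "verts E \<subseteq> T ` C \<union> Hd ` C"
        proof
          fix v assume "v \<in> verts E"
          then consider "v \<in> T ` (C - S) \<union> Hd ` (C - S)" | "v = T p \<or> v = Hd p"
            | "v \<in> (\<lambda>u. (p, u)) ` (verts RR - {ii, tt})" unfolding VE C'eq by blast
          then show "v \<in> T ` C \<union> Hd ` C"
          proof cases
            case 1 then show ?thesis by blast
          next
            case 2 then show ?thesis using b SC by blast
          next
            case 3 then show ?thesis using d SC by blast
          qed
        qed
        show "T ` C \<union> Hd ` C \<subseteq> verts E"
        proof
          fix v assume "v \<in> T ` C \<union> Hd ` C"
          then consider "v \<in> T ` (C - S) \<union> Hd ` (C - S)" | "v \<in> T ` S \<union> Hd ` S" using Ceq by blast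
          then show "v \<in> verts E"
          proof cases
            case 1 then show ?thesis unfolding VE C'eq by blast
          next
            case 2 then show ?thesis using a unfolding VE C'eq by blast
          qed
        qed
      qed
    qed
    have "E \<in> expansions RS" unfolding E_def by (rule expansions.replace_exp[OF E'1(1) pE])
    then have "good E C" unfolding good_def using arcsE tailE vertsE by blast
    then show ?thesis by blast
  qed
qed

end


lemma topX: "topspace (X_top RS) = Xsp RS"
proof -
  have op: "openin (X_top RS) = X_open RS" unfolding X_top_def using topology_inverse'[OF istopology_X_open[of RS]] .
  have "topspace (Omega_top RS) = Omega RS" unfolding Omega_top_def by (simp add: topspace_product_topology)
  have sub: "U \<subseteq> Xsp RS" if "X_open RS U" for U using that by (simp add: X_open_def)
  have "{\<omega> \<in> Omega RS. cls RS \<omega> \<in> Xsp RS} = Omega RS"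
    by (auto simp: cls_def Xsp_def intro: quotientI)
  then have "X_open RS (Xsp RS)" unfolding X_open_def
    using \<open>topspace (Omega_top RS) = Omega RS\<close> by (metis openin_topspace order_refl)
  then show ?thesis unfolding topspace_def op using sub by blast
qed

locale XPH = XP RS for RS :: "('v,'e) repsys" +
  fixes H :: "((nat \<Rightarrow> 'e) set \<Rightarrow> (nat \<Rightarrow> 'e) set) set"
  assumes sub: "subgroup H (rearr_group RS)" and finH: "finite H"
begin

abbreviation "G \<equiv> rearr_group RS"

lemma mult_ap: "p \<in> Xsp RS \<Longrightarrow> (f \<otimes>\<^bsub>G\<^esub> g) p = f (g p)"
  by (simp add: rearr_group_def compose_eq)

lemma one_ap: "p \<in> Xsp RS \<Longrightarrow> \<one>\<^bsub>G\<^esub> p = p"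
  by (simp add: rearr_group_def)

lemma H_mult: "f \<in> H \<Longrightarrow> g \<in> H \<Longrightarrow> f \<otimes>\<^bsub>G\<^esub> g \<in> H" by (rule subgroup.m_closed[OF sub])
lemma H_one: "\<one>\<^bsub>G\<^esub> \<in> H" by (rule subgroup.one_closed[OF sub])
lemma H_carrier: "f \<in> H \<Longrightarrow> f \<in> carrier G" by (rule subsetD[OF subgroup.subset[OF sub]])
lemma H_rearr: "f \<in> H \<Longrightarrow> rearrangement RS f" using H_carrier by (simp add: rearr_group_def)

lemma H_bij: assumes "f \<in> H" shows "inj_on f (Xsp RS)" "f ` Xsp RS = Xsp RS"
proof -
  have "homeomorphic_map (X_top RS) (X_top RS) f" using H_rearr[OF assms] by (simp add: rearrangement_def)
  then show "inj_on f (Xsp RS)" "f ` Xsp RS = Xsp RS"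
    using homeomorphic_imp_injective_map[of "X_top RS" "X_top RS" f]
      homeomorphic_imp_surjective_map[of "X_top RS" "X_top RS" f] topX[of RS] by simp_all
qed

primrec pw where
  "pw f 0 = \<one>\<^bsub>G\<^esub>"
| "pw f (Suc k) = f \<otimes>\<^bsub>G\<^esub> pw f k"

lemma pw_H: "f \<in> H \<Longrightarrow> pw f k \<in> H" by (induction k) (auto simp: H_one H_mult)

lemma pw_ap: "p \<in> Xsp RS \<Longrightarrow> pw f k p = (f ^^ k) p"
  by (induction k) (auto simp: one_ap mult_ap)

lemma funpow_inj: assumes "inj_on f A" "f ` A \<subseteq> A" shows "inj_on (f ^^ k) A" "(f ^^ k) ` A \<subseteq> A"
proof -
  have "inj_on (f ^^ k) A \<and> (f ^^ k) ` A \<subseteq> A"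
  proof (induction k)
    case 0 then show ?case by simp
  next
    case (Suc k)
    have i1: "inj_on (f \<circ> (f ^^ k)) A" using Suc assms by (intro comp_inj_on) (auto intro: inj_on_subset)
    have i2: "(f \<circ> (f ^^ k)) ` A \<subseteq> A" using Suc assms by (auto simp: image_subset_iff)
    show ?case using i1 i2 by (simp add: comp_def)
  qed
  then show "inj_on (f ^^ k) A" "(f ^^ k) ` A \<subseteq> A" by auto
qed

lemma inv_ex: assumes f: "f \<in> H" shows "\<exists>g\<in>H. \<forall>p\<in>Xsp RS. f (g p) = p \<and> g (f p) = p"
proof -
  have "\<not> inj (pw f)"
  proof
    assume "inj (pw f)"
    moreover have "range (pw f) \<subseteq> H" using pw_H[OF f] by auto
    then have "finite (range (pw f))" using finH finite_subset by blast
    ultimately have "finite (UNIV :: nat set)" using finite_imageD by blast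
    then show False by simp
  qed
  then obtain i j where ij: "i \<noteq> j" "pw f i = pw f j" unfolding inj_def by blast
  obtain a b where ab: "a < b" "pw f a = pw f b"
  proof (cases "i < j")
    case True then show ?thesis using that ij by blast
  next
    case False then have "j < i" using ij by simp
    then show ?thesis using that ij by metis
  qed
  define d where "d = b - a"
  have d1: "d \<ge> 1" using ab by (simp add: d_def)
  have inj: "inj_on f (Xsp RS)" "f ` Xsp RS \<subseteq> Xsp RS" using H_bij[OF f] by auto
  have per: "(f ^^ d) p = p" if p: "p \<in> Xsp RS" for p
  proof -
    have "(f ^^ a) p = (f ^^ b) p" using ab pw_ap[OF p] by metis
    also have "b = a + d" using ab by (simp add: d_def)
    then have "(f ^^ b) p = (f ^^ a) ((f ^^ d) p)" by (simp add: funpow_add)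
    finally have "(f ^^ a) p = (f ^^ a) ((f ^^ d) p)" .
    moreover have "(f ^^ d) p \<in> Xsp RS" using funpow_inj(2)[OF inj, of d] p by blast
    ultimately show ?thesis using funpow_inj(1)[OF inj, of a] p by (metis inj_onD)
  qed
  define g where "g = pw f (d - 1)"
  have dd: "d = Suc (d - 1)" using d1 by simp
  have "f (g p) = p \<and> g (f p) = p" if p: "p \<in> Xsp RS" for p
  proof
    have fp: "f p \<in> Xsp RS" using inj p by blast
    show "f (g p) = p" unfolding g_def pw_ap[OF p] using per[OF p] dd by (metis comp_apply funpow.simps(2))
    show "g (f p) = p" unfolding g_def pw_ap[OF fp] using per[OF p] dd by (metis comp_apply funpow_Suc_right)
  qed
  moreover have "g \<in> H" unfolding g_def by (rule pw_H[OF f])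
  ultimately show ?thesis by blast
qed

definition invH where "invH f = (SOME g. g \<in> H \<and> (\<forall>p\<in>Xsp RS. f (g p) = p \<and> g (f p) = p))"

lemma invH: assumes "f \<in> H" shows "invH f \<in> H" "\<And>p. p \<in> Xsp RS \<Longrightarrow> f (invH f p) = p"
  "\<And>p. p \<in> Xsp RS \<Longrightarrow> invH f (f p) = p"
proof -
  have ex: "\<exists>g. g \<in> H \<and> (\<forall>p\<in>Xsp RS. f (g p) = p \<and> g (f p) = p)" using inv_ex[OF assms] by blast
  have "invH f \<in> H \<and> (\<forall>p\<in>Xsp RS. f (invH f p) = p \<and> invH f (f p) = p)"
    unfolding invH_def using someI_ex[OF ex] .
  then show "invH f \<in> H" "\<And>p. p \<in> Xsp RS \<Longrightarrow> f (invH f p) = p"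
    "\<And>p. p \<in> Xsp RS \<Longrightarrow> invH f (f p) = p" by auto
qed

definition fs where "fs f w = (THE u. can f w u)"

lemma fs_eq: "can f w u \<Longrightarrow> fs f w = u" unfolding fs_def by (rule can_uniq')

definition "Nf f = (SOME N. \<forall>y. valid_word RS y \<and> N \<le> length y \<longrightarrow> (\<exists>u. can f y u))"

definition "N = (\<Sum>f\<in>H. Nf f)"

lemma dom: assumes f: "f \<in> H" and y: "valid_word RS y" "N \<le> length y" shows "can f y (fs f y)"
proof -
  have "\<forall>y. valid_word RS y \<and> Nf f \<le> length y \<longrightarrow> (\<exists>u. can f y u)"
    unfolding Nf_def using can_dom[OF H_rearr[OF f]] by (rule someI_ex)
  moreover have "Nf f \<le> N" unfolding N_def by (rule member_le_sum[OF f _ finH]) simp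
  ultimately obtain u where "can f y u" using y by (meson le_trans)
  then show ?thesis using fs_eq by simp
qed

definition "C0 = {y. valid_word RS y \<and> length y = Suc N}"

lemma valid_set: "valid_word RS w \<Longrightarrow> set w \<subseteq> arcs B0 \<union> arcs RR"
  unfolding valid_word_def by (cases w) auto

lemma C0_finite: "finite C0"
proof -
  have "C0 \<subseteq> {xs. set xs \<subseteq> arcs B0 \<union> arcs RR \<and> length xs = Suc N}"
    unfolding C0_def using valid_set by auto
  moreover have "finite {xs. set xs \<subseteq> arcs B0 \<union> arcs RR \<and> length xs = Suc N}"
    by (rule finite_lists_length_eq) (simp add: finR finB)
  ultimately show ?thesis using finite_subset by blast
qed

lemma C0_can: "f \<in> H \<Longrightarrow> x \<in> C0 \<Longrightarrow> can f x (fs f x)"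
  unfolding C0_def by (rule dom) auto

definition "D f = fs f ` C0"

lemma D_cut: assumes f: "f \<in> H" shows "cut (D f)"
  unfolding cut_def
proof (intro conjI ballI impI)
  define g where "g = invH f"
  have g: "g \<in> H" "\<And>p. p \<in> Xsp RS \<Longrightarrow> f (g p) = p" "\<And>p. p \<in> Xsp RS \<Longrightarrow> g (f p) = p"
    using invH[OF f] g_def by auto
  show "finite (D f)" unfolding D_def using C0_finite by simp
  show "valid_word RS w" if "w \<in> D f" for w
    using that C0_can[OF f] canD(2) unfolding D_def by blast
next
  define g where "g = invH f"
  have g: "g \<in> H" "\<And>p. p \<in> Xsp RS \<Longrightarrow> f (g p) = p" "\<And>p. p \<in> Xsp RS \<Longrightarrow> g (f p) = p"
    using invH[OF f] g_def by auto
  fix \<omega> assume o: "\<omega> \<in> Omega RS"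
  define p where "p = pref \<omega> N"
  have pC0: "p \<in> C0" unfolding C0_def p_def using valid_pref[OF o] by simp
  define y where "y = fs g p"
  have cgp: "can g p y" using C0_can[OF g(1) pC0] y_def by simp
  have cfy: "can f y p" using can_inv[OF cgp g(2)] .
  have vy: "valid_word RS y" using canD(1)[OF cfy] .
  have hp: "hasp \<omega> p" unfolding p_def by (rule hasp_pref)
  show "\<exists>w\<in>D f. hasp \<omega> w"
  proof (cases "Suc N \<le> length y")
    case True
    define x0 where "x0 = take (Suc N) y"
    define r where "r = drop (Suc N) y"
    have yx: "y = x0 @ r" by (simp add: x0_def r_def)
    have vx0: "valid_word RS x0" using vy True unfolding x0_def valid_word_def
      by (cases y) (auto dest: in_set_takeD)
    have x0C: "x0 \<in> C0" unfolding C0_def using vx0 True x0_def by simp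
    have c1: "can f x0 (fs f x0)" using C0_can[OF f x0C] .
    have "can f y (fs f x0 @ r)" using can_ext[OF c1] vy yx by simp
    then have "p = fs f x0 @ r" using can_uniq[OF cfy] by simp
    moreover have "fs f x0 \<noteq> []" using canD(2)[OF c1] by (simp add: valid_word_def)
    ultimately have "hasp \<omega> (fs f x0)" using hasp_mono[OF hp] by (metis prefixI)
    then show ?thesis using x0C unfolding D_def by blast
  next
    case False
    define k where "k = Suc N - length y"
    define r where "r = map \<omega> [Suc N..<Suc N + k]"
    have om: "\<omega> j \<in> arcs RR" if "j \<ge> 1" for j
    proof -
      have j: "j = Suc (j - 1)" using that by simp
      have "\<omega> (Suc (j - 1)) \<in> arcs RR" using o by (simp add: Omega_def)
      then show ?thesis using j by metis
    qed
    have rR: "set r \<subseteq> arcs RR" unfolding r_def using om by auto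
    have vyr: "valid_word RS (y @ r)" using vy rR unfolding valid_word_def by (cases y) auto
    have ly: "length (y @ r) = Suc N" using False by (simp add: r_def k_def)
    have yrC: "y @ r \<in> C0" using vyr ly by (simp add: C0_def)
    have "can f (y @ r) (p @ r)" using can_ext[OF cfy vyr] .
    then have e: "fs f (y @ r) = p @ r" by (rule fs_eq)
    have u: "[0..<Suc N + k] = [0..<Suc N] @ [Suc N..<Suc N + k]" by (rule upt_add_eq_append) simp
    have "p @ r = map \<omega> [0..<Suc N + k]" unfolding p_def r_def pref_def u by simp
    then have "p @ r = pref \<omega> (N + k)" by (simp add: pref_def del: upt_Suc)
    then have "hasp \<omega> (p @ r)" by (simp add: hasp_pref)
    then show ?thesis using e yrC unfolding D_def by (metis image_eqI)
  qed
next
  define g where "g = invH f"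
  have g: "g \<in> H" "\<And>p. p \<in> Xsp RS \<Longrightarrow> f (g p) = p" "\<And>p. p \<in> Xsp RS \<Longrightarrow> g (f p) = p"
    using invH[OF f] g_def by auto
  fix a b assume ab: "a \<in> D f" "b \<in> D f" "prefix a b"
  obtain x1 where x1: "x1 \<in> C0" "a = fs f x1" using ab(1) unfolding D_def by blast
  obtain x2 where x2: "x2 \<in> C0" "b = fs f x2" using ab(2) unfolding D_def by blast
  obtain r where r: "b = a @ r" using ab(3) by (auto simp: prefix_def)
  have c1: "can f x1 a" "can f x2 b" using C0_can[OF f] x1 x2 by auto
  have "can g a x1" using can_inv[OF c1(1) g(3)] .
  then have "can g b (x1 @ r)" using can_ext canD(2)[OF c1(2)] r by simp
  moreover have "can g b x2" using can_inv[OF c1(2) g(3)] .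
  ultimately have "x2 = x1 @ r" using can_uniq by blast
  moreover have "length x1 = length x2" using x1 x2 by (simp add: C0_def)
  ultimately have "r = []" by simp
  then show "a = b" using r by simp
qed

end


context XPH begin

definition "UD = (\<Union>f\<in>H. D f)"
definition "Cst = {w \<in> UD. \<not> (\<exists>q\<in>UD. strict_prefix w q)}"

lemma UD_finite: "finite UD"
  unfolding UD_def using finH D_cut by (auto simp: cut_def)

lemma UD_valid: "w \<in> UD \<Longrightarrow> valid_word RS w"
  unfolding UD_def using D_cut by (auto simp: cut_def)

lemma C_cut: "cut Cst"
  unfolding cut_def
proof (intro conjI ballI impI)
  show "finite Cst" using UD_finite by (simp add: Cst_def)
  show "valid_word RS w" if "w \<in> Cst" for w using that UD_valid by (simp add: Cst_def)
next
  fix \<omega> assume o: "\<omega> \<in> Omega RS"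
  define P where "P = {q \<in> UD. hasp \<omega> q}"
  have Pfin: "finite P" using UD_finite by (simp add: P_def)
  obtain q0 where "q0 \<in> D \<one>\<^bsub>G\<^esub>" "hasp \<omega> q0" using D_cut[OF H_one] o unfolding cut_def by blast
  then have Pne: "P \<noteq> {}" using H_one unfolding P_def UD_def by blast
  define L where "L = Max (length ` P)"
  have "L \<in> length ` P" unfolding L_def using Pfin Pne by (intro Max_in) auto
  then obtain p where p: "p \<in> P" "length p = L" by auto
  have Lmax: "\<And>q. q \<in> P \<Longrightarrow> length q \<le> L" unfolding L_def using Pfin by simp
  have "p \<in> Cst"
  proof -
    have "\<not> (\<exists>q\<in>UD. strict_prefix p q)"
    proof
      assume "\<exists>q\<in>UD. strict_prefix p q"
      then obtain q h where q: "h \<in> H" "q \<in> D h" "strict_prefix p q" unfolding UD_def by blast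
      obtain q' where q': "q' \<in> D h" "hasp \<omega> q'" using D_cut[OF q(1)] o unfolding cut_def by blast
      have "q' \<in> P" using q' q(1) unfolding P_def UD_def by blast
      then have lq': "length q' \<le> length p" using Lmax p by simp
      have hp: "hasp \<omega> p" using p(1) by (simp add: P_def)
      have "prefix q' p"
      proof (cases "prefix q' p")
        case False
        then have pq: "prefix p q'" using hasp_prefix[OF hp q'(2)] by blast
        then have "length p = length q'" using lq' prefix_length_le by fastforce
        then show ?thesis using prefix_eq_len[OF pq] by simp
      qed simp
      then have "prefix q' q" using q(3) by (meson prefix_order.dual_order.strict_implies_order prefix_order.order_trans)
      then have "q' = q" using D_cut[OF q(1)] q'(1) q(2) unfolding cut_def by blast
      then have "length q \<le> length p" using lq' by simp
      moreover have "length p < length q" using q(3) by (rule prefix_length_less)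
      ultimately show False by simp
    qed
    then show ?thesis using p(1) by (simp add: Cst_def P_def)
  qed
  moreover have "hasp \<omega> p" using p(1) by (simp add: P_def)
  ultimately show "\<exists>w\<in>Cst. hasp \<omega> w" by blast
next
  fix a b assume ab: "a \<in> Cst" "b \<in> Cst" "prefix a b"
  show "a = b"
  proof (rule ccontr)
    assume "a \<noteq> b"
    then have "strict_prefix a b" using ab(3) by (simp add: strict_prefix_def)
    then show False using ab(1,2) by (auto simp: Cst_def)
  qed
qed

lemma C_refine: assumes w: "w \<in> Cst" and h: "h \<in> H" shows "\<exists>q\<in>D h. prefix q w"
proof -
  have vw: "valid_word RS w" using w UD_valid by (simp add: Cst_def)
  then have w0: "w \<noteq> []" by (simp add: valid_word_def)
  obtain q where q: "q \<in> D h" "hasp (gseq w 0) q" using D_cut[OF h] gseq_Omega[OF vw] unfolding cut_def by blast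
  have "prefix q w"
  proof (cases "prefix q w")
    case False
    then have "prefix w q" using hasp_prefix[OF gseq_hasp[OF w0] q(2)] by blast
    then have "strict_prefix w q" using False by (auto simp: strict_prefix_def)
    moreover have "q \<in> UD" using q(1) h unfolding UD_def by blast
    ultimately show ?thesis using w by (auto simp: Cst_def)
  qed simp
  then show ?thesis using q(1) by blast
qed

lemma D_one: "D \<one>\<^bsub>G\<^esub> = C0"
proof -
  have "fs \<one>\<^bsub>G\<^esub> x = x" if "x \<in> C0" for x
    using that can_id[of x "\<one>\<^bsub>G\<^esub>"] one_ap fs_eq by (simp add: C0_def)
  then show ?thesis unfolding D_def by simp
qed

lemma C_long: "w \<in> Cst \<Longrightarrow> Suc N \<le> length w"
  using C_refine[OF _ H_one] D_one prefix_length_le by (fastforce simp: C0_def)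

lemma C_valid: "w \<in> Cst \<Longrightarrow> valid_word RS w" using UD_valid by (simp add: Cst_def)

lemma C_can: assumes f: "f \<in> H" and w: "w \<in> Cst" shows "can f w (fs f w)"
proof -
  have "N \<le> length w" using C_long[OF w] by simp
  then show ?thesis using dom[OF f C_valid[OF w]] by simp
qed

lemma C_inv: assumes f: "f \<in> H" and w: "w \<in> Cst" shows "fs f w \<in> Cst"
proof -
  have "w \<in> UD" using w by (simp add: Cst_def)
  then obtain g0 y where g0: "g0 \<in> H" "y \<in> C0" "w = fs g0 y" unfolding UD_def D_def by blast
  have cg: "can g0 y w" using C0_can[OF g0(1,2)] g0(3) by simp
  define v where "v = fs f w"
  have cf: "can f w v" using C_can[OF f w] v_def by simp
  have "can (f \<otimes>\<^bsub>G\<^esub> g0) y v" using can_comp[OF cg cf] mult_ap by blast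
  then have "v = fs (f \<otimes>\<^bsub>G\<^esub> g0) y" using fs_eq by simp
  then have vU: "v \<in> UD" using H_mult[OF f g0(1)] g0(2) unfolding UD_def D_def by blast
  have "\<not> (\<exists>q\<in>UD. strict_prefix v q)"
  proof
    assume "\<exists>q\<in>UD. strict_prefix v q"
    then obtain h y' q where hq: "h \<in> H" "y' \<in> C0" "q = fs h y'" "strict_prefix v q"
      unfolding UD_def D_def by blast
    have ch: "can h y' q" using C0_can[OF hq(1,2)] hq(3) by simp
    define f' where "f' = invH f"
    have f': "f' \<in> H" "\<And>p. p \<in> Xsp RS \<Longrightarrow> f' (f p) = p" using invH[OF f] f'_def by auto
    obtain r where r: "q = v @ r" "r \<noteq> []" using hq(4)
      by (auto simp: strict_prefix_def prefix_def)
    have "can f' v w" using can_inv[OF cf f'(2)] .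
    then have "can f' q (w @ r)" using can_ext canD(2)[OF ch] r(1) by simp
    then have "can (f' \<otimes>\<^bsub>G\<^esub> h) y' (w @ r)" using can_comp[OF ch] mult_ap by blast
    then have "w @ r = fs (f' \<otimes>\<^bsub>G\<^esub> h) y'" using fs_eq by simp
    then have "w @ r \<in> UD" using H_mult[OF f'(1) hq(1)] hq(2) unfolding UD_def D_def by blast
    moreover have "strict_prefix w (w @ r)" using r(2) by (simp add: strict_prefix_def)
    ultimately show False using w by (auto simp: Cst_def)
  qed
  then show ?thesis using vU v_def by (simp add: Cst_def)
qed

lemma C_back: assumes f: "f \<in> H" and g: "\<And>p. p \<in> Xsp RS \<Longrightarrow> g (f p) = p" and w: "w \<in> Cst"
  shows "fs g (fs f w) = w"
  using can_inv[OF C_can[OF f w] g] fs_eq by simp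

definition phv where
  "phv f v = (if \<exists>x\<in>Cst. T x = v then T (fs f (SOME x. x \<in> Cst \<and> T x = v))
              else Hd (fs f (SOME x. x \<in> Cst \<and> Hd x = v)))"

lemma Er_ii: "Er ii x = T x" and Er_tt: "Er tt x = Hd x" using ii_ne_tt by (auto simp: Er_def)

lemma phv_T: assumes f: "f \<in> H" and x: "x \<in> Cst" shows "phv f (T x) = T (fs f x)"
proof -
  have ex: "\<exists>x'. x' \<in> Cst \<and> T x' = T x" using x by blast
  define x' where "x' = (SOME x'. x' \<in> Cst \<and> T x' = T x)"
  have x': "x' \<in> Cst" "T x' = T x" using someI_ex[OF ex] x'_def by auto
  have "Er ii (fs f x') = Er ii (fs f x)"
    using VR[OF C_can[OF f x'(1)] C_can[OF f x], of ii ii] x'(2) by (simp add: Er_ii)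
  then show ?thesis unfolding phv_def using x x' by (auto simp: x'_def[symmetric] Er_ii)
qed

lemma phv_Hd: assumes f: "f \<in> H" and x: "x \<in> Cst" shows "phv f (Hd x) = Hd (fs f x)"
proof (cases "\<exists>x'\<in>Cst. T x' = Hd x")
  case True
  then have ex: "\<exists>x'. x' \<in> Cst \<and> T x' = Hd x" by blast
  define x' where "x' = (SOME x'. x' \<in> Cst \<and> T x' = Hd x)"
  have x': "x' \<in> Cst" "T x' = Hd x" using someI_ex[OF ex] x'_def by auto
  have "Er ii (fs f x') = Er tt (fs f x)"
    using VR[OF C_can[OF f x'(1)] C_can[OF f x], of ii tt] x'(2) by (simp add: Er_ii Er_tt)
  then show ?thesis unfolding phv_def using True by (simp add: x'_def[symmetric] Er_ii Er_tt)
next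
  case False
  have ex: "\<exists>x'. x' \<in> Cst \<and> Hd x' = Hd x" using x by blast
  define x' where "x' = (SOME x'. x' \<in> Cst \<and> Hd x' = Hd x)"
  have x': "x' \<in> Cst" "Hd x' = Hd x" using someI_ex[OF ex] x'_def by auto
  have "Er tt (fs f x') = Er tt (fs f x)"
    using VR[OF C_can[OF f x'(1)] C_can[OF f x], of tt tt] x'(2) by (simp add: Er_tt)
  then show ?thesis unfolding phv_def using False by (simp add: x'_def[symmetric] Er_tt)
qed

lemma H_Aut: assumes E: "good E Cst" and f: "f \<in> H" shows "f \<in> Aut_R RS E"
proof -
  have E1: "arcs E = Cst" "\<And>x. x \<in> Cst \<Longrightarrow> tail E x = T x \<and> head E x = Hd x"
    "verts E = T ` Cst \<union> Hd ` Cst" using E unfolding good_def by auto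
  define g where "g = invH f"
  have g: "g \<in> H" "\<And>p. p \<in> Xsp RS \<Longrightarrow> f (g p) = p" "\<And>p. p \<in> Xsp RS \<Longrightarrow> g (f p) = p"
    using invH[OF f] g_def by auto
  have be: "bij_betw (fs f) (arcs E) (arcs E)" unfolding E1(1)
  proof (rule bij_betw_byWitness[where f'="fs g"])
    show "\<forall>a\<in>Cst. fs g (fs f a) = a" using C_back[OF f g(3)] by blast
    show "\<forall>a\<in>Cst. fs f (fs g a) = a" using C_back[OF g(1) g(2)] by blast
    show "fs f ` Cst \<subseteq> Cst" using C_inv[OF f] by blast
    show "fs g ` Cst \<subseteq> Cst" using C_inv[OF g(1)] by blast
  qed
  have bv: "bij_betw (phv f) (verts E) (verts E)" unfolding E1(3)
  proof (rule bij_betw_byWitness[where f'="phv g"])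
    show "\<forall>a\<in>T ` Cst \<union> Hd ` Cst. phv g (phv f a) = a"
      using phv_T[OF f] phv_T[OF g(1)] phv_Hd[OF f] phv_Hd[OF g(1)] C_inv[OF f] C_back[OF f g(3)] by auto
    show "\<forall>a\<in>T ` Cst \<union> Hd ` Cst. phv f (phv g a) = a"
      using phv_T[OF f] phv_T[OF g(1)] phv_Hd[OF f] phv_Hd[OF g(1)] C_inv[OF g(1)] C_back[OF g(1) g(2)] by auto
    show "phv f ` (T ` Cst \<union> Hd ` Cst) \<subseteq> T ` Cst \<union> Hd ` Cst"
      using phv_T[OF f] phv_Hd[OF f] C_inv[OF f] by auto
    show "phv g ` (T ` Cst \<union> Hd ` Cst) \<subseteq> T ` Cst \<union> Hd ` Cst"
      using phv_T[OF g(1)] phv_Hd[OF g(1)] C_inv[OF g(1)] by auto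
  qed
  have th: "\<forall>x\<in>arcs E. tail E (fs f x) = phv f (tail E x) \<and> head E (fs f x) = phv f (head E x)"
    using E1(1,2) C_inv[OF f] phv_T[OF f] phv_Hd[OF f] by auto
  have cn: "\<forall>x\<in>arcs E. canonical_on RS f x (fs f x)"
    using E1(1) C_can[OF f] by (auto simp: can_def)
  show ?thesis unfolding Aut_R_def using H_carrier[OF f] be bv th cn by blast
qed

lemma main: "\<exists>E\<in>expansions RS. H \<subseteq> Aut_R RS E"
proof -
  obtain E where E: "good E Cst" using cut_good[OF C_cut] by blast
  then have "E \<in> expansions RS" by (simp add: good_def)
  moreover have "H \<subseteq> Aut_R RS E" using H_Aut[OF E] by blast
  ultimately show ?thesis by blast
qed

end

theorem theorem2p9:
  fixes RS :: "('v,'e) repsys"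
    and H :: "((nat \<Rightarrow> 'e) set \<Rightarrow> (nat \<Rightarrow> 'e) set) set"
  assumes "expanding RS"
    and "subgroup H (rearr_group RS)"
    and "finite H"
  shows "\<exists>E\<in>expansions RS. H \<subseteq> Aut_R RS E"
proof -
  interpret XPH RS H
    by (rule XPH.intro[OF XP.intro[OF assms(1)] XPH_axioms.intro[OF assms(2,3)]])
  show ?thesis by (rule main)
qed


end
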